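(* Let the setting described in the context hold, with the repetitive transmission protocol (TP3). Then for every $t\in\{0,\kappa,2\kappa,\ldots\}$ the finite-horizon optimal control problem $$\min_{\eta_t,\Theta_t}\ \mathbb{E}_{x_t}\big[x_{t:N+1}^\top\mathcal{Q}x_{t:N+1}+(u^a_{t:N})^\top\mathcal{R}u^a_{t:N}\big]$$ subject to $x_{t:N+1}=\mathcal{A}x_t+\mathcal{B}u^a_{t:N}+\mathcal{D}w_{t:N}$, $u^a_{t:N}=\mathcal{G}\eta_t+\mathcal{S}\Theta_t\varphi(w_{t:N-1})$, and $u_s\in\mathbb{U}$ for all $s$, is convex and feasible, and it can be rewritten as the following tractable program with tightened constraints: $$\min_{\eta_t,\Theta_t}\ c_t+2\,\mathrm{tr}\big(\Theta_t^\top\mu_{\mathcal{S}}^\top\mathcal{B}^\top\mathcal{Q}\mathcal{D}\Sigma'_{\varphi}\big)+2x_t^\top\mathcal{A}^\top\mathcal{Q}\mathcal{B}\mu_{\mathcal{G}}\eta_t+\mathrm{tr}\big(\eta_t^\top\Sigma_{\mathcal{G}}\eta_t\big)+\mathrm{tr}\big(\Theta_t^\top\Sigma_{\mathcal{S}}\Theta_t\Sigma_{\varphi}\big)$$ subject to: $\Theta_t$ has the strictly lower block triangular structure described in the context, and $|\eta_t^{(i)}|+\|\Theta_t^{(i)}\|_1\varphi_{\max}\le U_{\max}$ for all $i=1,\ldots,Nm$, where $\eta_t^{(i)}$ is the $i$-th component of $\eta_t$ and $\Theta_t^{(i)}$ the $i$-th row of $\Theta_t$.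
   Context: System: $x_{t+1}=Ax_t+Bu^a_t+w_t$, $x_0=\bar x\in\mathbb{R}^d$, with $A\in\mathbb{R}^{d\times d}$, $B\in\mathbb{R}^{d\times m}$. $(w_t)_{t\in\mathbb{N}}$ is an i.i.d. sequence of zero-mean $\mathbb{R}^d$-valued random vectors with bounded fourth moments, each component of $w_t$ symmetrically distributed about the origin. The state is measured perfectly at every time and the sensor-to-controller channel is noiseless. Controls must lie in $\mathbb{U}=\{v\in\mathbb{R}^m:\|v\|_\infty\le U_{\max}\}$, $U_{\max}>0$. Data are sent from controller to actuator over an erasure channel; $(\nu_t)_{t\in\mathbb{N}}$ is an i.i.d. Bernoulli $\{0,1\}$ sequence with $\mathbb{E}[\nu_t]=p\in\,]0,1]$, independent of $(w_t)$; $\nu_t=1$ means successful transmission at time $t$. Acknowledgements are available to the controller, so $w_t=x_{t+1}-Ax_t-Bu^a_t$ is known to the controller at time $t+1$. $u^a_t$ denotes the control actually applied at the actuator. Notation: $s_{n:k}=(s_n^\top,\ldots,s_{n+k-1}^\top)^\top$. Fix a horizon $N\in\mathbb{N}$ and an integer $\kappa\in\{1,\ldots,N\}$. $Q,Q_f$ symmetric positive semidefinite, $R$ symmetric positive definite; $\mathcal{Q}=\mathrm{blkdiag}(Q,\ldots,Q,Q_f)$ ($N$ copies of $Q$), $\mathcal{R}=\mathrm{blkdiag}(R,\ldots,R)$ ($N$ copies). $\mathcal{A}=(I_d;A;\ldots;A^N)$; $\mathcal{B}\in\mathbb{R}^{(N+1)d\times Nm}$ has block $(i,j)$ ($i=0,\ldots,N$,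 $j=1,\ldots,N$) equal to $A^{i-j}B$ if $i\ge j$, $0$ otherwise; $\mathcal{D}\in\mathbb{R}^{(N+1)d\times Nd}$ has block $(i,j)$ equal to $A^{i-j}$ if $i\ge j$, $0$ otherwise. Policy class: $u_{t+\ell}=\eta_{t+\ell}+\sum_{i=0}^{\ell-1}\theta_{\ell,t+i}\varphi_{i+1}(w_{t+i})$, $\ell=0,\ldots,N-1$; in stacked form $u_{t:N}=\eta_t+\Theta_t\varphi(w_{t:N-1})$ with $\eta_t\in\mathbb{R}^{Nm}$, $\varphi(w_{t:N-1})=(\varphi_1(w_t)^\top,\ldots,\varphi_{N-1}(w_{t+N-2})^\top)^\top$, each $\varphi_i:\mathbb{R}^d\to\mathbb{R}^d$ a measurable saturation-type map symmetric about the origin with $\mathbb{E}[\varphi_i(w_{t+i-1})]=0$ and $\|\varphi(w_{t:N-1})\|_\infty\le\varphi_{\max}$; $\Theta_t\in\mathbb{R}^{Nm\times(N-1)d}$ strictly lower block triangular with block row $\ell$ equal to $(\theta_{\ell,t},\ldots,\theta_{\ell,t+\ell-1},0,\ldots,0)$, $\theta_{\ell,s}\in\mathbb{R}^{m\times d}$. Protocol TP3: the control value $u_{t+\ell}$ is transmitted at each step; in addition, the remaining (future) blocks of the first $m\kappa$ entries of $\eta_t$ are transmitted at each step until the first successful transmission, stored in an actuator buffer and used in case of a later dropout (buffer emptied every $\kappa$ steps). Hence $u^a_{t:N}=\mathcal{G}\eta_t+\mathcal{S}\Theta_t\varphi(w_{t:N-1})$ where $\mathcal{S}=\mathrm{blkdiag}(\nu_tI_m,\ldots,\nu_{t+\kappa-1}I_m,I_{m(N-\kappa)})$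 and $\mathcal{G}=\mathrm{blkdiag}(\rho_tI_m,\rho_{t+1}I_m,\ldots,\rho_{t+\kappa-1}I_m,I_{m(N-\kappa)})$ with $\rho_t=\nu_t$ and $\rho_{t+\ell}=\rho_{t+\ell-1}+\big(\prod_{s=0}^{\ell-1}(1-\nu_{t+s})\big)\nu_{t+\ell}$. Quantities: $\Sigma_\varphi=\mathbb{E}[\varphi(w_{t:N-1})\varphi(w_{t:N-1})^\top]$, $\Sigma'_\varphi=\mathbb{E}[w_{t:N}\varphi(w_{t:N-1})^\top]$, $\Sigma_W=\mathbb{E}[w_{t:N}w_{t:N}^\top]$, $\mu_{\mathcal{S}}=\mathbb{E}[\mathcal{S}]$, $\Sigma_{\mathcal{S}}=\mathbb{E}[\mathcal{S}^\top(\mathcal{B}^\top\mathcal{Q}\mathcal{B}+\mathcal{R})\mathcal{S}]$, $\mu_{\mathcal{G}}=\mathbb{E}[\mathcal{G}]$, $\Sigma_{\mathcal{G}}=\mathbb{E}[\mathcal{G}^\top(\mathcal{B}^\top\mathcal{Q}\mathcal{B}+\mathcal{R})\mathcal{G}]$, $c_t=x_t^\top\mathcal{A}^\top\mathcal{Q}\mathcal{A}x_t+\mathrm{tr}(\mathcal{D}^\top\mathcal{Q}\mathcal{D}\Sigma_W)$. $\mathbb{E}_{x_t}$ is expectation conditional on $x_t$. *)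

theory Defs
  imports "HOL-Probability.Probability" "Jordan_Normal_Form.Matrix"
begin

definition mtrace :: "real mat \<Rightarrow> real" where
  "mtrace A = (\<Sum>i<dim_row A. A $$ (i, i))"

definition qform :: "real mat \<Rightarrow> real vec \<Rightarrow> real" where
  "qform P v = scalar_prod v (P *\<^sub>v v)"

definition outer :: "real vec \<Rightarrow> real vec \<Rightarrow> real mat" where
  "outer v u = mat (dim_vec v) (dim_vec u) (\<lambda>(i, j). v $ i * u $ j)"

definition blockmat :: "nat \<Rightarrow> nat \<Rightarrow> nat \<Rightarrow> nat \<Rightarrow> (nat \<Rightarrow> nat \<Rightarrow> real mat) \<Rightarrow> real mat" where
  "blockmat r c nr nc F =
     mat (nr * r) (nc * c) (\<lambda>(i, j). F (i div r) (j div c) $$ (i mod r, j mod c))"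

definition calA :: "nat \<Rightarrow> nat \<Rightarrow> real mat \<Rightarrow> real mat" where
  "calA N d A = blockmat d d (N + 1) 1 (\<lambda>i j. A ^\<^sub>m i)"

text \<open>Block (i,j), i = 0..N, j = 1..N, equals A^(i-j) B if i >= j; here columns are
  0-indexed (j' = j - 1), so the condition is j' < i and the power is i - j' - 1.\<close>
definition calB :: "nat \<Rightarrow> nat \<Rightarrow> nat \<Rightarrow> real mat \<Rightarrow> real mat \<Rightarrow> real mat" where
  "calB N d m A B = blockmat d m (N + 1) N
     (\<lambda>i j. if j < i then A ^\<^sub>m (i - j - 1) * B else 0\<^sub>m d m)"

definition calD :: "nat \<Rightarrow> nat \<Rightarrow> real mat \<Rightarrow> real mat" where
  "calD N d A = blockmat d d (N + 1) N
     (\<lambda>i j. if j < i then A ^\<^sub>m (i - j - 1) else 0\<^sub>m d d)"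

definition calQ :: "nat \<Rightarrow> nat \<Rightarrow> real mat \<Rightarrow> real mat \<Rightarrow> real mat" where
  "calQ N d Q Qf = blockmat d d (N + 1) (N + 1)
     (\<lambda>i j. if i = j then (if i = N then Qf else Q) else 0\<^sub>m d d)"

definition calR :: "nat \<Rightarrow> nat \<Rightarrow> real mat \<Rightarrow> real mat" where
  "calR N m R = blockmat m m N N (\<lambda>i j. if i = j then R else 0\<^sub>m m m)"

text \<open>The noise is given componentwise: W s \<omega> j is component j (j < d) of w_s(\<omega>).
  As an R^d-valued random vector it is the extensional function restricted to {..<d}.\<close>
definition wrv :: "nat \<Rightarrow> (nat \<Rightarrow> 'a \<Rightarrow> nat \<Rightarrow> real) \<Rightarrow> nat \<Rightarrow> 'a \<Rightarrow> nat \<Rightarrow> real" where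
  "wrv d W s \<omega> = restrict (W s \<omega>) {..<d}"

definition Rd :: "nat \<Rightarrow> (nat \<Rightarrow> real) measure" where
  "Rd d = PiM {..<d} (\<lambda>_. borel)"

definition wvec :: "nat \<Rightarrow> (nat \<Rightarrow> 'a \<Rightarrow> nat \<Rightarrow> real) \<Rightarrow> nat \<Rightarrow> 'a \<Rightarrow> real vec" where
  "wvec d W s \<omega> = vec d (W s \<omega>)"

definition wstack :: "nat \<Rightarrow> nat \<Rightarrow> (nat \<Rightarrow> 'a \<Rightarrow> nat \<Rightarrow> real) \<Rightarrow> nat \<Rightarrow> 'a \<Rightarrow> real vec" where
  "wstack d N W t \<omega> = vec (N * d) (\<lambda>i. W (t + i div d) \<omega> (i mod d))"

definition phistack :: "nat \<Rightarrow> nat \<Rightarrow> (nat \<Rightarrow> real vec \<Rightarrow> real vec)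
     \<Rightarrow> (nat \<Rightarrow> 'a \<Rightarrow> nat \<Rightarrow> real) \<Rightarrow> nat \<Rightarrow> 'a \<Rightarrow> real vec" where
  "phistack d N phi W t \<omega> =
     vec ((N - 1) * d) (\<lambda>i. phi (i div d + 1) (wvec d W (t + i div d) \<omega>) $ (i mod d))"

fun rho :: "(nat \<Rightarrow> 'a \<Rightarrow> real) \<Rightarrow> nat \<Rightarrow> nat \<Rightarrow> 'a \<Rightarrow> real" where
  "rho nu t 0 \<omega> = nu t \<omega>"
| "rho nu t (Suc l) \<omega> = rho nu t l \<omega> + (\<Prod>s\<le>l. 1 - nu (t + s) \<omega>) * nu (t + Suc l) \<omega>"

definition Smat :: "nat \<Rightarrow> nat \<Rightarrow> nat \<Rightarrow> (nat \<Rightarrow> 'a \<Rightarrow> real) \<Rightarrow> nat \<Rightarrow> 'a \<Rightarrow> real mat" where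
  "Smat m N \<kappa> nu t \<omega> = mat (N * m) (N * m)
     (\<lambda>(i, j). if i = j then (if i div m < \<kappa> then nu (t + i div m) \<omega> else 1) else 0)"

definition Gmat :: "nat \<Rightarrow> nat \<Rightarrow> nat \<Rightarrow> (nat \<Rightarrow> 'a \<Rightarrow> real) \<Rightarrow> nat \<Rightarrow> 'a \<Rightarrow> real mat" where
  "Gmat m N \<kappa> nu t \<omega> = mat (N * m) (N * m)
     (\<lambda>(i, j). if i = j then (if i div m < \<kappa> then rho nu t (i div m) \<omega> else 1) else 0)"

definition mexp :: "'a measure \<Rightarrow> nat \<Rightarrow> nat \<Rightarrow> ('a \<Rightarrow> real mat) \<Rightarrow> real mat" where
  "mexp M n k X = mat n k (\<lambda>(i, j). integral\<^sup>L M (\<lambda>\<omega>. X \<omega> $$ (i, j)))"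

definition uapplied where
  "uapplied d m N \<kappa> phi W nu t \<eta> \<Theta> \<omega> =
     Gmat m N \<kappa> nu t \<omega> *\<^sub>v \<eta> + Smat m N \<kappa> nu t \<omega> *\<^sub>v (\<Theta> *\<^sub>v phistack d N phi W t \<omega>)"

text \<open>Transmitted (computed) control u_{t:N} = eta + Theta phi(w_{t:N-1}).\<close>
definition ucomp where
  "ucomp d N phi W t \<eta> \<Theta> \<omega> = \<eta> + \<Theta> *\<^sub>v phistack d N phi W t \<omega>"

definition xtraj where
  "xtraj d m N \<kappa> A B phi W nu t xt \<eta> \<Theta> \<omega> =
     calA N d A *\<^sub>v xt + calB N d m A B *\<^sub>v uapplied d m N \<kappa> phi W nu t \<eta> \<Theta> \<omega>
     + calD N d A *\<^sub>v wstack d N W t \<omega>"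

definition Jcost where
  "Jcost M d m N \<kappa> A B Q Qf R phi W nu t xt \<eta> \<Theta> =
     integral\<^sup>L M (\<lambda>\<omega>. qform (calQ N d Q Qf) (xtraj d m N \<kappa> A B phi W nu t xt \<eta> \<Theta> \<omega>)
                    + qform (calR N m R) (uapplied d m N \<kappa> phi W nu t \<eta> \<Theta> \<omega>))"

definition theta_struct :: "nat \<Rightarrow> nat \<Rightarrow> nat \<Rightarrow> real mat \<Rightarrow> bool" where
  "theta_struct d m N \<Theta> \<longleftrightarrow> \<Theta> \<in> carrier_mat (N * m) ((N - 1) * d) \<and>
     (\<forall>i < N * m. \<forall>k < (N - 1) * d. i div m \<le> k div d \<longrightarrow> \<Theta> $$ (i, k) = 0)"

definition decision :: "nat \<Rightarrow> nat \<Rightarrow> nat \<Rightarrow> real vec \<Rightarrow> real mat \<Rightarrow> bool" where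
  "decision d m N \<eta> \<Theta> \<longleftrightarrow> \<eta> \<in> carrier_vec (N * m) \<and> theta_struct d m N \<Theta>"

definition feasible where
  "feasible M d m N phi W t Umax \<eta> \<Theta> \<longleftrightarrow> decision d m N \<eta> \<Theta> \<and>
     (AE \<omega> in M. \<forall>i < N * m. \<bar>ucomp d N phi W t \<eta> \<Theta> \<omega> $ i\<bar> \<le> Umax)"

definition tightened :: "nat \<Rightarrow> nat \<Rightarrow> nat \<Rightarrow> real \<Rightarrow> real \<Rightarrow> real vec \<Rightarrow> real mat \<Rightarrow> bool" where
  "tightened d m N phimax Umax \<eta> \<Theta> \<longleftrightarrow>
     (\<forall>i < N * m. \<bar>\<eta> $ i\<bar> + (\<Sum>k < (N - 1) * d. \<bar>\<Theta> $$ (i, k)\<bar>) * phimax \<le> Umax)"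

definition Mmat where
  "Mmat d m N A B Q Qf R =
     (calB N d m A B)\<^sup>T * calQ N d Q Qf * calB N d m A B + calR N m R"

definition SigPhi where
  "SigPhi M d N phi W t = mexp M ((N - 1) * d) ((N - 1) * d)
     (\<lambda>\<omega>. outer (phistack d N phi W t \<omega>) (phistack d N phi W t \<omega>))"

definition SigPhi' where
  "SigPhi' M d N phi W t = mexp M (N * d) ((N - 1) * d)
     (\<lambda>\<omega>. outer (wstack d N W t \<omega>) (phistack d N phi W t \<omega>))"

definition SigW where
  "SigW M d N W t = mexp M (N * d) (N * d)
     (\<lambda>\<omega>. outer (wstack d N W t \<omega>) (wstack d N W t \<omega>))"

definition muS where
  "muS M m N \<kappa> nu t = mexp M (N * m) (N * m) (Smat m N \<kappa> nu t)"

definition SigS where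
  "SigS M d m N \<kappa> A B Q Qf R nu t = mexp M (N * m) (N * m)
     (\<lambda>\<omega>. (Smat m N \<kappa> nu t \<omega>)\<^sup>T * Mmat d m N A B Q Qf R * Smat m N \<kappa> nu t \<omega>)"

definition muG where
  "muG M m N \<kappa> nu t = mexp M (N * m) (N * m) (Gmat m N \<kappa> nu t)"

definition SigG where
  "SigG M d m N \<kappa> A B Q Qf R nu t = mexp M (N * m) (N * m)
     (\<lambda>\<omega>. (Gmat m N \<kappa> nu t \<omega>)\<^sup>T * Mmat d m N A B Q Qf R * Gmat m N \<kappa> nu t \<omega>)"

definition ct where
  "ct M d N A Q Qf W t xt =
     qform ((calA N d A)\<^sup>T * calQ N d Q Qf * calA N d A) xt
     + mtrace ((calD N d A)\<^sup>T * calQ N d Q Qf * calD N d A * SigW M d N W t)"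

text \<open>c_t + 2 tr(Theta^T muS^T B^T Q D Sigma'_phi) + 2 x_t^T A^T Q B muG eta
  + tr(eta^T SigmaG eta) + tr(Theta^T SigmaS Theta Sigma_phi);
  the 1x1 trace tr(eta^T SigmaG eta) is written as the quadratic form.\<close>
definition Jtract where
  "Jtract M d m N \<kappa> A B Q Qf R phi W nu t xt \<eta> \<Theta> =
     ct M d N A Q Qf W t xt
     + 2 * mtrace (\<Theta>\<^sup>T * (muS M m N \<kappa> nu t)\<^sup>T * (calB N d m A B)\<^sup>T * calQ N d Q Qf
                   * calD N d A * SigPhi' M d N phi W t)
     + 2 * scalar_prod xt (((calA N d A)\<^sup>T * calQ N d Q Qf * calB N d m A B * muG M m N \<kappa> nu t) *\<^sub>v \<eta>)
     + qform (SigG M d m N \<kappa> A B Q Qf R nu t) \<eta>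
     + mtrace (\<Theta>\<^sup>T * SigS M d m N \<kappa> A B Q Qf R nu t * \<Theta> * SigPhi M d N phi W t)"

definition sym_psd :: "nat \<Rightarrow> real mat \<Rightarrow> bool" where
  "sym_psd n P \<longleftrightarrow> P \<in> carrier_mat n n \<and> P\<^sup>T = P \<and> (\<forall>v \<in> carrier_vec n. qform P v \<ge> 0)"

definition sym_pd :: "nat \<Rightarrow> real mat \<Rightarrow> bool" where
  "sym_pd n P \<longleftrightarrow> P \<in> carrier_mat n n \<and> P\<^sup>T = P \<and>
     (\<forall>v \<in> carrier_vec n. v \<noteq> 0\<^sub>v n \<longrightarrow> qform P v > 0)"

end

theory Submission
  imports Defs
begin


lemma mtrace_mult_sum:
  assumes "A \<in> carrier_mat n k" "B \<in> carrier_mat k n"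
  shows "mtrace (A * B) = (\<Sum>i<n. \<Sum>j<k. A $$ (i,j) * B $$ (j,i))"
  using assms unfolding mtrace_def
  by (auto simp: scalar_prod_def atLeast0LessThan intro!: sum.cong)

lemma mtrace_comm:
  assumes "A \<in> carrier_mat n k" "B \<in> carrier_mat k n"
  shows "mtrace (A * B) = mtrace (B * A)"
  using assms by (simp add: mtrace_mult_sum[OF assms] mtrace_mult_sum[OF assms(2,1)]
      sum.swap[of _ "{..<n}"] mult.commute)

lemma mtrace_outer:
  assumes "P \<in> carrier_mat n k" "v \<in> carrier_vec k" "u \<in> carrier_vec n"
  shows "mtrace (P * outer v u) = u \<bullet> (P *\<^sub>v v)"
proof -
  have "outer v u \<in> carrier_mat k n" using assms by (simp add: outer_def)
  then have "mtrace (P * outer v u) = (\<Sum>i<n. \<Sum>j<k. P $$ (i,j) * (v $ j * u $ i))"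
    using assms by (simp add: mtrace_mult_sum outer_def)
  also have "\<dots> = u \<bullet> (P *\<^sub>v v)"
    using assms by (simp add: scalar_prod_def atLeast0LessThan sum_distrib_left mult_ac)
  finally show ?thesis .
qed

lemma bil:
  fixes C P C' :: "real mat"
  assumes "C \<in> carrier_mat n k" "P \<in> carrier_mat n l" "C' \<in> carrier_mat l j"
    "a \<in> carrier_vec k" "b \<in> carrier_vec j"
  shows "(C *\<^sub>v a) \<bullet> (P *\<^sub>v (C' *\<^sub>v b)) = a \<bullet> ((C\<^sup>T * P * C') *\<^sub>v b)"
proof -
  have "(C\<^sup>T * P * C') *\<^sub>v b = (C\<^sup>T * P) *\<^sub>v (C' *\<^sub>v b)"
    by (rule assoc_mult_mat_vec) (use assms in auto)
  also have "\<dots> = C\<^sup>T *\<^sub>v (P *\<^sub>v (C' *\<^sub>v b))"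
    by (rule assoc_mult_mat_vec) (use assms in auto)
  moreover have "(C *\<^sub>v a) \<bullet> (P *\<^sub>v (C' *\<^sub>v b)) = a \<bullet> (C\<^sup>T *\<^sub>v (P *\<^sub>v (C' *\<^sub>v b)))"
    using transpose_vec_mult_scalar[of "C\<^sup>T" k n "P *\<^sub>v (C' *\<^sub>v b)" a] assms by simp
  ultimately show ?thesis by simp
qed

lemma sym_swap:
  fixes P :: "real mat"
  assumes "P \<in> carrier_mat n n" "P\<^sup>T = P" "a \<in> carrier_vec n" "b \<in> carrier_vec n"
  shows "a \<bullet> (P *\<^sub>v b) = b \<bullet> (P *\<^sub>v a)"
proof -
  have "a \<bullet> (P *\<^sub>v b) = (P\<^sup>T *\<^sub>v a) \<bullet> b"
    using transpose_vec_mult_scalar[of P n n b a] assms by simp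
  also have "\<dots> = b \<bullet> (P\<^sup>T *\<^sub>v a)" using assms by (intro comm_scalar_prod[of _ n]) auto
  finally show ?thesis using assms by simp
qed

lemma qform_expand3:
  fixes Q :: "real mat"
  assumes Q: "Q \<in> carrier_mat n n" "Q\<^sup>T = Q" and v: "a \<in> carrier_vec n" "b \<in> carrier_vec n" "c \<in> carrier_vec n"
  shows "qform Q (a + b + c) = a \<bullet> (Q *\<^sub>v a) + 2 * (a \<bullet> (Q *\<^sub>v b)) + 2 * (a \<bullet> (Q *\<^sub>v c))
     + b \<bullet> (Q *\<^sub>v b) + 2 * (b \<bullet> (Q *\<^sub>v c)) + c \<bullet> (Q *\<^sub>v c)"
proof -
  have s1: "b \<bullet> (Q *\<^sub>v a) = a \<bullet> (Q *\<^sub>v b)" "c \<bullet> (Q *\<^sub>v a) = a \<bullet> (Q *\<^sub>v c)"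
     "c \<bullet> (Q *\<^sub>v b) = b \<bullet> (Q *\<^sub>v c)"
    using sym_swap[OF Q] v by auto
  have "qform Q (a + b + c) = (a + b + c) \<bullet> (Q *\<^sub>v a + Q *\<^sub>v b + Q *\<^sub>v c)"
    unfolding qform_def using Q v
    by (simp add: mult_add_distrib_mat_vec[of Q n n "a+b" c] mult_add_distrib_mat_vec[of Q n n a b] del: assoc_add_vec)
  also have "\<dots> = a \<bullet> (Q *\<^sub>v a) + a \<bullet> (Q *\<^sub>v b) + a \<bullet> (Q *\<^sub>v c)
     + (b \<bullet> (Q *\<^sub>v a) + b \<bullet> (Q *\<^sub>v b) + b \<bullet> (Q *\<^sub>v c))
     + (c \<bullet> (Q *\<^sub>v a) + c \<bullet> (Q *\<^sub>v b) + c \<bullet> (Q *\<^sub>v c))"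
    using Q v by (simp add: add_scalar_prod_distrib[of _ n] scalar_prod_add_distrib[of _ n])
  finally show ?thesis unfolding s1 by simp
qed

lemma qform_expand2:
  fixes Q :: "real mat"
  assumes Q: "Q \<in> carrier_mat n n" "Q\<^sup>T = Q" and v: "a \<in> carrier_vec n" "b \<in> carrier_vec n"
  shows "qform Q (a + b) = a \<bullet> (Q *\<^sub>v a) + a \<bullet> (Q *\<^sub>v b) + b \<bullet> (Q *\<^sub>v a) + b \<bullet> (Q *\<^sub>v b)"
proof -
  have "qform Q (a + b) = (a + b) \<bullet> (Q *\<^sub>v a + Q *\<^sub>v b)"
    unfolding qform_def using Q v by (simp add: mult_add_distrib_mat_vec[of _ n n])
  also have "\<dots> = a \<bullet> (Q *\<^sub>v a) + a \<bullet> (Q *\<^sub>v b) + (b \<bullet> (Q *\<^sub>v a) + b \<bullet> (Q *\<^sub>v b))"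
    using Q v by (simp add: add_scalar_prod_distrib[of _ n] scalar_prod_add_distrib[of _ n])
  finally show ?thesis by simp
qed

lemma bilL:
  fixes C C2 P C' :: "real mat"
  assumes "C \<in> carrier_mat n k" "C2 \<in> carrier_mat k k2" "P \<in> carrier_mat n l" "C' \<in> carrier_mat l j"
    "a \<in> carrier_vec k2" "b \<in> carrier_vec j"
  shows "(C *\<^sub>v (C2 *\<^sub>v a)) \<bullet> (P *\<^sub>v (C' *\<^sub>v b)) = a \<bullet> ((C2\<^sup>T * (C\<^sup>T * P * C')) *\<^sub>v b)"
proof -
  have "(C *\<^sub>v (C2 *\<^sub>v a)) \<bullet> (P *\<^sub>v (C' *\<^sub>v b)) = (C2 *\<^sub>v a) \<bullet> ((C\<^sup>T * P * C') *\<^sub>v b)"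
    by (rule bil) (use assms in auto)
  also have "\<dots> = (C2 *\<^sub>v a) \<bullet> ((C\<^sup>T * P * C') *\<^sub>v (1\<^sub>m j *\<^sub>v b))" using assms by simp
  also have "\<dots> = a \<bullet> ((C2\<^sup>T * (C\<^sup>T * P * C') * 1\<^sub>m j) *\<^sub>v b)"
    by (rule bil) (use assms in auto)
  also have "C2\<^sup>T * (C\<^sup>T * P * C') * 1\<^sub>m j = C2\<^sup>T * (C\<^sup>T * P * C')"
    using assms by (intro right_mult_one_mat) auto
  finally show ?thesis .
qed

lemma bilR:
  fixes C C2 P C' :: "real mat"
  assumes "C \<in> carrier_mat n k" "P \<in> carrier_mat n l" "C' \<in> carrier_mat l j" "C2 \<in> carrier_mat j j2"
    "a \<in> carrier_vec k" "b \<in> carrier_vec j2"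
  shows "(C *\<^sub>v a) \<bullet> (P *\<^sub>v (C' *\<^sub>v (C2 *\<^sub>v b))) = a \<bullet> ((C\<^sup>T * P * C' * C2) *\<^sub>v b)"
proof -
  have "(C *\<^sub>v a) \<bullet> (P *\<^sub>v (C' *\<^sub>v (C2 *\<^sub>v b))) = a \<bullet> ((C\<^sup>T * P * C') *\<^sub>v (C2 *\<^sub>v b))"
    by (rule bil) (use assms in auto)
  also have "(C\<^sup>T * P * C') *\<^sub>v (C2 *\<^sub>v b) = (C\<^sup>T * P * C' * C2) *\<^sub>v b"
    by (rule assoc_mult_mat_vec[symmetric]) (use assms in auto)
  finally show ?thesis .
qed

lemma pointwise:
  fixes CA CB CD CQ CR G S Th :: "real mat" and xt eta F X :: "real vec"
  assumes CA: "CA \<in> carrier_mat pd d" and CB: "CB \<in> carrier_mat pd q" and CD: "CD \<in> carrier_mat pd r"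
    and CQ: "CQ \<in> carrier_mat pd pd" "CQ\<^sup>T = CQ" and CR: "CR \<in> carrier_mat q q"
    and G: "G \<in> carrier_mat q q" and S: "S \<in> carrier_mat q q"
    and xt: "xt \<in> carrier_vec d" and eta: "eta \<in> carrier_vec q" and Th: "Th \<in> carrier_mat q s"
    and F: "F \<in> carrier_vec s" and X: "X \<in> carrier_vec r"
  defines "f \<equiv> Th *\<^sub>v F" and "MM \<equiv> CB\<^sup>T * CQ * CB + CR" and "K \<equiv> CB\<^sup>T * CQ * CD"
  shows "qform CQ (CA *\<^sub>v xt + CB *\<^sub>v (G *\<^sub>v eta + S *\<^sub>v f) + CD *\<^sub>v X)
      + qform CR (G *\<^sub>v eta + S *\<^sub>v f) =
     xt \<bullet> ((CA\<^sup>T * CQ * CA) *\<^sub>v xt) + X \<bullet> ((CD\<^sup>T * CQ * CD) *\<^sub>v X)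
     + 2 * (xt \<bullet> ((CA\<^sup>T * CQ * CD) *\<^sub>v X))
     + 2 * (xt \<bullet> ((CA\<^sup>T * CQ * CB * G) *\<^sub>v eta)) + 2 * (xt \<bullet> ((CA\<^sup>T * CQ * CB * S) *\<^sub>v f))
     + 2 * (eta \<bullet> ((G\<^sup>T * K) *\<^sub>v X)) + 2 * (f \<bullet> ((S\<^sup>T * K) *\<^sub>v X))
     + eta \<bullet> ((G\<^sup>T * MM * G) *\<^sub>v eta) + eta \<bullet> ((G\<^sup>T * MM * S) *\<^sub>v f)
     + f \<bullet> ((S\<^sup>T * MM * G) *\<^sub>v eta) + f \<bullet> ((S\<^sup>T * MM * S) *\<^sub>v f)"
proof -
  have f: "f \<in> carrier_vec q" using Th F unfolding f_def by simp
  define g where "g = G *\<^sub>v eta"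
  define sv where "sv = S *\<^sub>v f"
  have g: "g \<in> carrier_vec q" and sv: "sv \<in> carrier_vec q" using G S eta f g_def sv_def by auto
  have MM: "MM \<in> carrier_mat q q" using CB CQ CR unfolding MM_def by simp
  have e1: "qform CQ (CA *\<^sub>v xt + CB *\<^sub>v (g + sv) + CD *\<^sub>v X) =
      (CA *\<^sub>v xt) \<bullet> (CQ *\<^sub>v (CA *\<^sub>v xt)) + 2 * ((CA *\<^sub>v xt) \<bullet> (CQ *\<^sub>v (CB *\<^sub>v (g + sv))))
      + 2 * ((CA *\<^sub>v xt) \<bullet> (CQ *\<^sub>v (CD *\<^sub>v X)))
      + (CB *\<^sub>v (g + sv)) \<bullet> (CQ *\<^sub>v (CB *\<^sub>v (g + sv))) + 2 * ((CB *\<^sub>v (g + sv)) \<bullet> (CQ *\<^sub>v (CD *\<^sub>v X)))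
      + (CD *\<^sub>v X) \<bullet> (CQ *\<^sub>v (CD *\<^sub>v X))"
    by (rule qform_expand3[OF CQ]) (use CA CB CD xt g sv X in auto)
  have t1: "(CA *\<^sub>v xt) \<bullet> (CQ *\<^sub>v (CA *\<^sub>v xt)) = xt \<bullet> ((CA\<^sup>T * CQ * CA) *\<^sub>v xt)"
    by (rule bil) (use CA CQ xt in auto)
  have t2: "(CD *\<^sub>v X) \<bullet> (CQ *\<^sub>v (CD *\<^sub>v X)) = X \<bullet> ((CD\<^sup>T * CQ * CD) *\<^sub>v X)"
    by (rule bil) (use CD CQ X in auto)
  have t3: "(CA *\<^sub>v xt) \<bullet> (CQ *\<^sub>v (CD *\<^sub>v X)) = xt \<bullet> ((CA\<^sup>T * CQ * CD) *\<^sub>v X)"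
    by (rule bil) (use CA CD CQ X xt in auto)
  have "(CA *\<^sub>v xt) \<bullet> (CQ *\<^sub>v (CB *\<^sub>v (g + sv))) =
      (CA *\<^sub>v xt) \<bullet> (CQ *\<^sub>v (CB *\<^sub>v (G *\<^sub>v eta))) + (CA *\<^sub>v xt) \<bullet> (CQ *\<^sub>v (CB *\<^sub>v (S *\<^sub>v f)))"
    using CA CB CQ g sv xt unfolding g_def sv_def
    by (simp add: mult_add_distrib_mat_vec[of CB pd q] mult_add_distrib_mat_vec[of CQ pd pd]
        scalar_prod_add_distrib[of _ pd])
  also have "\<dots> = xt \<bullet> ((CA\<^sup>T * CQ * CB * G) *\<^sub>v eta) + xt \<bullet> ((CA\<^sup>T * CQ * CB * S) *\<^sub>v f)"
    using bilR[OF CA CQ(1) CB G xt eta] bilR[OF CA CQ(1) CB S xt f] by simp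
  finally have t4: "(CA *\<^sub>v xt) \<bullet> (CQ *\<^sub>v (CB *\<^sub>v (g + sv))) =
      xt \<bullet> ((CA\<^sup>T * CQ * CB * G) *\<^sub>v eta) + xt \<bullet> ((CA\<^sup>T * CQ * CB * S) *\<^sub>v f)" .
  have "(CB *\<^sub>v (g + sv)) \<bullet> (CQ *\<^sub>v (CD *\<^sub>v X)) =
      (CB *\<^sub>v (G *\<^sub>v eta)) \<bullet> (CQ *\<^sub>v (CD *\<^sub>v X)) + (CB *\<^sub>v (S *\<^sub>v f)) \<bullet> (CQ *\<^sub>v (CD *\<^sub>v X))"
    using CB CQ CD X g sv unfolding g_def sv_def
    by (simp add: mult_add_distrib_mat_vec[of CB pd q] add_scalar_prod_distrib[of _ pd])
  also have "\<dots> = eta \<bullet> ((G\<^sup>T * K) *\<^sub>v X) + f \<bullet> ((S\<^sup>T * K) *\<^sub>v X)"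
    using bilL[OF CB G CQ(1) CD eta X] bilL[OF CB S CQ(1) CD f X] unfolding K_def by simp
  finally have t5: "(CB *\<^sub>v (g + sv)) \<bullet> (CQ *\<^sub>v (CD *\<^sub>v X)) =
      eta \<bullet> ((G\<^sup>T * K) *\<^sub>v X) + f \<bullet> ((S\<^sup>T * K) *\<^sub>v X)" .
  have "(CB *\<^sub>v (g + sv)) \<bullet> (CQ *\<^sub>v (CB *\<^sub>v (g + sv))) + qform CR (g + sv)
      = (g + sv) \<bullet> ((CB\<^sup>T * CQ * CB) *\<^sub>v (g + sv)) + (g + sv) \<bullet> (CR *\<^sub>v (g + sv))"
    unfolding qform_def by (subst bil) (use CB CQ g sv in auto)
  also have "\<dots> = qform MM (g + sv)"
  proof -
    have "MM *\<^sub>v (g + sv) = (CB\<^sup>T * CQ * CB) *\<^sub>v (g + sv) + CR *\<^sub>v (g + sv)"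
      unfolding MM_def by (rule add_mult_distrib_mat_vec) (use CB CQ CR g sv in auto)
    moreover have "(CB\<^sup>T * CQ * CB) *\<^sub>v (g + sv) \<in> carrier_vec q" "CR *\<^sub>v (g + sv) \<in> carrier_vec q"
      "g + sv \<in> carrier_vec q"
      using CB CQ CR g sv by (metis mult_carrier_mat transpose_carrier_mat mult_mat_vec_carrier add_carrier_vec)+
    ultimately show ?thesis unfolding qform_def
      by (simp only:) (rule scalar_prod_add_distrib[of _ q, symmetric])
  qed
  also have "\<dots> = g \<bullet> (MM *\<^sub>v g) + g \<bullet> (MM *\<^sub>v sv) + sv \<bullet> (MM *\<^sub>v g) + sv \<bullet> (MM *\<^sub>v sv)"
    unfolding qform_def using MM g sv
    by (simp add: mult_add_distrib_mat_vec[of _ q q] add_scalar_prod_distrib[of _ q] scalar_prod_add_distrib[of _ q])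
  also have "\<dots> = eta \<bullet> ((G\<^sup>T * MM * G) *\<^sub>v eta) + eta \<bullet> ((G\<^sup>T * MM * S) *\<^sub>v f)
     + f \<bullet> ((S\<^sup>T * MM * G) *\<^sub>v eta) + f \<bullet> ((S\<^sup>T * MM * S) *\<^sub>v f)"
    unfolding g_def sv_def
    using bil[OF G MM G eta eta] bil[OF G MM S eta f] bil[OF S MM G f eta] bil[OF S MM S f f] by simp
  finally have t6: "(CB *\<^sub>v (g + sv)) \<bullet> (CQ *\<^sub>v (CB *\<^sub>v (g + sv))) + qform CR (g + sv) =
     eta \<bullet> ((G\<^sup>T * MM * G) *\<^sub>v eta) + eta \<bullet> ((G\<^sup>T * MM * S) *\<^sub>v f)
     + f \<bullet> ((S\<^sup>T * MM * G) *\<^sub>v eta) + f \<bullet> ((S\<^sup>T * MM * S) *\<^sub>v f)" .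
  show ?thesis
    using e1 t1 t2 t3 t4 t5 t6 unfolding g_def[symmetric] sv_def[symmetric] by (simp add: algebra_simps)
qed

locale tp3 =
  fixes M :: "'a measure" and d N :: nat and W :: "nat \<Rightarrow> 'a \<Rightarrow> nat \<Rightarrow> real"
    and nu :: "nat \<Rightarrow> 'a \<Rightarrow> real" and phi :: "nat \<Rightarrow> real vec \<Rightarrow> real vec" and phimax :: real
  assumes P: "prob_space M"
    and indep: "prob_space.indep_var M
                       (PiM UNIV (\<lambda>_. Rd d)) (\<lambda>\<omega> s. wrv d W s \<omega>)
                       (PiM UNIV (\<lambda>_. PiM UNIV (\<lambda>_. borel))) (\<lambda>\<omega> s (_::nat). nu s \<omega>)"
    and w_mean: "\<And>s j. j < d \<Longrightarrow>
                   integrable M (\<lambda>\<omega>. W s \<omega> j) \<and> integral\<^sup>L M (\<lambda>\<omega>. W s \<omega> j) = 0"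
    and w_4th: "\<And>s j. j < d \<Longrightarrow> integrable M (\<lambda>\<omega>. (W s \<omega> j) ^ 4)"
    and nu_01: "\<And>s \<omega>. nu s \<omega> \<in> {0, 1}"
    and phi_meas: "\<And>i. 1 \<le> i \<Longrightarrow> i \<le> N - 1 \<Longrightarrow>
                     (\<lambda>v. restrict (\<lambda>j. phi i (vec d v) $ j) {..<d}) \<in> Rd d \<rightarrow>\<^sub>M Rd d"
    and phi_bound: "\<And>i v j. 1 \<le> i \<Longrightarrow> i \<le> N - 1 \<Longrightarrow> v \<in> carrier_vec d \<Longrightarrow> j < d \<Longrightarrow>
                     \<bar>phi i v $ j\<bar> \<le> phimax"
    and phi_mean: "\<And>i s j. 1 \<le> i \<Longrightarrow> i \<le> N - 1 \<Longrightarrow> j < d \<Longrightarrow>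
                     integral\<^sup>L M (\<lambda>\<omega>. phi i (wvec d W s \<omega>) $ j) = 0"

sublocale tp3 \<subseteq> prob_space M by (rule P)

context tp3
begin

definition "MW = PiM UNIV (\<lambda>_::nat. Rd d)"
definition "MN = PiM UNIV (\<lambda>_::nat. PiM UNIV (\<lambda>_::nat. borel :: real measure))"
definition "Yw \<omega> = (\<lambda>s. wrv d W s \<omega>)"
definition "Yn \<omega> = (\<lambda>s (_::nat). nu s \<omega>)"
definition "wty (f::'a\<Rightarrow>real) \<longleftrightarrow> (\<exists>h\<in>borel_measurable MW. \<forall>\<omega>\<in>space M. f \<omega> = h (Yw \<omega>))"
definition "nty (f::'a\<Rightarrow>real) \<longleftrightarrow> (\<exists>h\<in>borel_measurable MN. \<forall>\<omega>\<in>space M. f \<omega> = h (Yn \<omega>))"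
definition "goodN (f::'a\<Rightarrow>real) \<longleftrightarrow> nty f \<and> (\<exists>B. \<forall>\<omega>\<in>space M. \<bar>f \<omega>\<bar> \<le> B)"
definition "goodW (f::'a\<Rightarrow>real) \<longleftrightarrow> wty f \<and> integrable M (\<lambda>\<omega>. (f \<omega>)^2)"

lemma indep': "indep_var MW Yw MN Yn"
  using indep unfolding MW_def MN_def Yw_def[abs_def] Yn_def[abs_def] by simp

lemma Yw_meas: "Yw \<in> M \<rightarrow>\<^sub>M MW" using indep_var_rv1[OF indep'] by simp
lemma Yn_meas: "Yn \<in> M \<rightarrow>\<^sub>M MN" using indep_var_rv2[OF indep'] by simp

lemma wty_meas: "wty f \<Longrightarrow> f \<in> borel_measurable M"
  unfolding wty_def
  by (metis (no_types, lifting) Yw_meas measurable_comp comp_def measurable_cong)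
lemma nty_meas: "nty f \<Longrightarrow> f \<in> borel_measurable M"
  unfolding nty_def
  by (metis (no_types, lifting) Yn_meas measurable_comp comp_def measurable_cong)

lemma wty_const: "wty (\<lambda>_. c)" unfolding wty_def by (intro bexI[of _ "\<lambda>_. c"]) auto
lemma nty_const: "nty (\<lambda>_. c)" unfolding nty_def by (intro bexI[of _ "\<lambda>_. c"]) auto

lemma wty_add: assumes "wty f" "wty g" shows "wty (\<lambda>\<omega>. f \<omega> + g \<omega>)"
proof -
  from assms obtain h1 h2 where "h1 \<in> borel_measurable MW" "\<forall>\<omega>\<in>space M. f \<omega> = h1 (Yw \<omega>)"
    "h2 \<in> borel_measurable MW" "\<forall>\<omega>\<in>space M. g \<omega> = h2 (Yw \<omega>)" unfolding wty_def by blast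
  then show ?thesis unfolding wty_def by (intro bexI[of _ "\<lambda>y. h1 y + h2 y"]) auto
qed
lemma wty_mult: assumes "wty f" "wty g" shows "wty (\<lambda>\<omega>. f \<omega> * g \<omega>)"
proof -
  from assms obtain h1 h2 where "h1 \<in> borel_measurable MW" "\<forall>\<omega>\<in>space M. f \<omega> = h1 (Yw \<omega>)"
    "h2 \<in> borel_measurable MW" "\<forall>\<omega>\<in>space M. g \<omega> = h2 (Yw \<omega>)" unfolding wty_def by blast
  then show ?thesis unfolding wty_def by (intro bexI[of _ "\<lambda>y. h1 y * h2 y"]) auto
qed
lemma nty_add: assumes "nty f" "nty g" shows "nty (\<lambda>\<omega>. f \<omega> + g \<omega>)"
proof -
  from assms obtain h1 h2 where "h1 \<in> borel_measurable MN" "\<forall>\<omega>\<in>space M. f \<omega> = h1 (Yn \<omega>)"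
    "h2 \<in> borel_measurable MN" "\<forall>\<omega>\<in>space M. g \<omega> = h2 (Yn \<omega>)" unfolding nty_def by blast
  then show ?thesis unfolding nty_def by (intro bexI[of _ "\<lambda>y. h1 y + h2 y"]) auto
qed
lemma nty_mult: assumes "nty f" "nty g" shows "nty (\<lambda>\<omega>. f \<omega> * g \<omega>)"
proof -
  from assms obtain h1 h2 where "h1 \<in> borel_measurable MN" "\<forall>\<omega>\<in>space M. f \<omega> = h1 (Yn \<omega>)"
    "h2 \<in> borel_measurable MN" "\<forall>\<omega>\<in>space M. g \<omega> = h2 (Yn \<omega>)" unfolding nty_def by blast
  then show ?thesis unfolding nty_def by (intro bexI[of _ "\<lambda>y. h1 y * h2 y"]) auto
qed

lemma wty_sum: "finite I \<Longrightarrow> (\<And>i. i \<in> I \<Longrightarrow> wty (f i)) \<Longrightarrow> wty (\<lambda>\<omega>. \<Sum>i\<in>I. f i \<omega>)"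
  by (induction I rule: finite_induct) (auto intro: wty_add wty_const)
lemma nty_sum: "finite I \<Longrightarrow> (\<And>i. i \<in> I \<Longrightarrow> nty (f i)) \<Longrightarrow> nty (\<lambda>\<omega>. \<Sum>i\<in>I. f i \<omega>)"
  by (induction I rule: finite_induct) (auto intro: nty_add nty_const)

lemma wty_W: "j < d \<Longrightarrow> wty (\<lambda>\<omega>. W s \<omega> j)"
  unfolding wty_def
proof (intro bexI[of _ "\<lambda>y. y s j"] ballI)
  assume j: "j < d"
  have m1: "(\<lambda>y. y s) \<in> MW \<rightarrow>\<^sub>M Rd d" unfolding MW_def by (rule measurable_component_singleton) simp
  have m2: "(\<lambda>v. v j) \<in> Rd d \<rightarrow>\<^sub>M borel" unfolding Rd_def using j by (intro measurable_component_singleton) simp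
  show "(\<lambda>y. y s j) \<in> borel_measurable MW"
    using measurable_comp[OF m1 m2] by (simp add: comp_def)
  fix \<omega> show "W s \<omega> j = Yw \<omega> s j" using j by (simp add: Yw_def wrv_def)
qed

lemma nty_nu: "nty (\<lambda>\<omega>. nu s \<omega>)"
  unfolding nty_def
proof (intro bexI[of _ "\<lambda>y. y s 0"] ballI)
  have m1: "(\<lambda>y. y s) \<in> MN \<rightarrow>\<^sub>M PiM UNIV (\<lambda>_::nat. borel :: real measure)" unfolding MN_def by (rule measurable_component_singleton) simp
  have m2: "(\<lambda>v. v (0::nat)) \<in> PiM UNIV (\<lambda>_::nat. borel :: real measure) \<rightarrow>\<^sub>M borel" by (intro measurable_component_singleton) simp
  show "(\<lambda>y. y s 0) \<in> borel_measurable MN"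
    using measurable_comp[OF m1 m2] by (simp add: comp_def)
qed (simp add: Yn_def)

lemma wty_phi:
  assumes i: "1 \<le> i" "i \<le> N - 1" and j: "j < d"
  shows "wty (\<lambda>\<omega>. phi i (wvec d W s \<omega>) $ j)"
  unfolding wty_def
proof (intro bexI[of _ "\<lambda>y. (\<lambda>v. restrict (\<lambda>j. phi i (vec d v) $ j) {..<d}) (y s) j"] ballI)
  have m1: "(\<lambda>y. y s) \<in> MW \<rightarrow>\<^sub>M Rd d" unfolding MW_def by (rule measurable_component_singleton) simp
  have m2: "(\<lambda>v. v j) \<in> Rd d \<rightarrow>\<^sub>M borel" unfolding Rd_def using j by (intro measurable_component_singleton) simp
  show "(\<lambda>y. (\<lambda>v. restrict (\<lambda>j. phi i (vec d v) $ j) {..<d}) (y s) j) \<in> borel_measurable MW"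
    using measurable_comp[OF measurable_comp[OF m1 phi_meas[OF i]] m2] by (simp add: comp_def)
  fix \<omega>
  have "vec d (restrict (W s \<omega>) {..<d}) = vec d (W s \<omega>)" by (intro eq_vecI) auto
  then show "phi i (wvec d W s \<omega>) $ j = (\<lambda>v. restrict (\<lambda>j. phi i (vec d v) $ j) {..<d}) (Yw \<omega> s) j"
    using j by (simp add: Yw_def wrv_def wvec_def)
qed

end



lemma abs_le_1_sq: "\<bar>x::real\<bar> \<le> 1 + x^2"
proof -
  have "0 \<le> (\<bar>x\<bar> - 1)^2" by simp
  then have "2 * \<bar>x\<bar> \<le> x^2 + 1" by (simp add: power2_eq_square algebra_simps)
  then show ?thesis by (smt (verit) zero_le_power2)
qed

lemma abs_prod_le_sq: "\<bar>x * y::real\<bar> \<le> x^2 + y^2"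
proof -
  have "0 \<le> (\<bar>x\<bar> - \<bar>y\<bar>)^2" by simp
  then have "2 * (\<bar>x\<bar> * \<bar>y\<bar>) \<le> x^2 + y^2" by (simp add: power2_eq_square algebra_simps)
  then show ?thesis by (simp add: abs_mult) (smt (verit) mult_nonneg_nonneg abs_ge_zero)
qed

lemma sum_sq_le: "(x + y::real)^2 \<le> 2 * x^2 + 2 * y^2"
proof -
  have "0 \<le> (x - y)^2" by simp
  then show ?thesis by (simp add: power2_eq_square algebra_simps)
qed

context tp3 begin

lemma goodN_meas: "goodN f \<Longrightarrow> f \<in> borel_measurable M"
  unfolding goodN_def using nty_meas by blast

lemma goodN_int: "goodN f \<Longrightarrow> integrable M f"
  unfolding goodN_def using nty_meas
  by (metis (no_types, lifting) AE_I2 integrable_const_bound real_norm_def)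

lemma goodW_meas: "goodW f \<Longrightarrow> f \<in> borel_measurable M"
  unfolding goodW_def using wty_meas by blast

lemma goodW_int: assumes "goodW f" shows "integrable M f"
proof -
  have "integrable M (\<lambda>\<omega>. 1 + (f \<omega>)^2)" using assms unfolding goodW_def by auto
  then show ?thesis
    by (rule Bochner_Integration.integrable_bound) (use goodW_meas[OF assms] abs_le_1_sq in auto)
qed

lemma goodW_prod: assumes "goodW f" "goodW g" shows "integrable M (\<lambda>\<omega>. f \<omega> * g \<omega>)"
proof -
  have "integrable M (\<lambda>\<omega>. (f \<omega>)^2 + (g \<omega>)^2)" using assms unfolding goodW_def by auto
  then show ?thesis
    by (rule Bochner_Integration.integrable_bound)
       (use goodW_meas[OF assms(1)] goodW_meas[OF assms(2)] abs_prod_le_sq in auto)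
qed

lemma goodW_add: assumes "goodW f" "goodW g" shows "goodW (\<lambda>\<omega>. f \<omega> + g \<omega>)"
proof -
  have "integrable M (\<lambda>\<omega>. 2 * (f \<omega>)^2 + 2 * (g \<omega>)^2)" using assms unfolding goodW_def by auto
  then have "integrable M (\<lambda>\<omega>. (f \<omega> + g \<omega>)^2)"
    by (rule Bochner_Integration.integrable_bound)
       (use goodW_meas[OF assms(1)] goodW_meas[OF assms(2)] sum_sq_le in auto)
  then show ?thesis using assms unfolding goodW_def by (auto intro: wty_add)
qed

lemma goodW_const: "goodW (\<lambda>_. c)"
  unfolding goodW_def by (auto intro: wty_const)

lemma goodW_cmult: assumes "goodW f" shows "goodW (\<lambda>\<omega>. c * f \<omega>)"
  using assms unfolding goodW_def by (auto intro: wty_mult wty_const simp: power_mult_distrib)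

lemma goodW_sum: "finite I \<Longrightarrow> (\<And>i. i \<in> I \<Longrightarrow> goodW (f i)) \<Longrightarrow> goodW (\<lambda>\<omega>. \<Sum>i\<in>I. f i \<omega>)"
  by (induction I rule: finite_induct) (auto intro: goodW_add goodW_const)

lemma goodW_bnd: assumes "wty f" "\<And>\<omega>. \<omega> \<in> space M \<Longrightarrow> \<bar>f \<omega>\<bar> \<le> B" shows "goodW f"
proof -
  have "integrable M (\<lambda>\<omega>. (f \<omega>)^2)"
  proof (rule integrable_const_bound[where B="B^2"])
    show "AE x in M. norm ((f x)^2) \<le> B^2"
    proof (intro AE_I2)
      fix x assume x: "x \<in> space M"
      have "\<bar>f x\<bar>^2 \<le> B^2" by (rule power_mono) (use assms(2)[OF x] in auto)
      then show "norm ((f x)^2) \<le> B^2" by simp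
    qed
    show "(\<lambda>\<omega>. (f \<omega>)^2) \<in> borel_measurable M" using wty_meas[OF assms(1)] by simp
  qed
  then show ?thesis using assms unfolding goodW_def by simp
qed

lemma goodW_W: assumes "j < d" shows "goodW (\<lambda>\<omega>. W s \<omega> j)"
proof -
  have "integrable M (\<lambda>\<omega>. 1 + (W s \<omega> j)^4)" using w_4th[OF assms] by auto
  then have "integrable M (\<lambda>\<omega>. (W s \<omega> j)^2)"
  proof (rule Bochner_Integration.integrable_bound)
    show "(\<lambda>\<omega>. (W s \<omega> j)^2) \<in> borel_measurable M" using wty_meas[OF wty_W[OF assms]] by simp
    show "AE x in M. norm ((W s x j)^2) \<le> norm (1 + (W s x j)^4)"
    proof (intro AE_I2)
      fix x
      have "\<bar>(W s x j)^2\<bar> \<le> 1 + ((W s x j)^2)^2" by (rule abs_le_1_sq)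
      then show "norm ((W s x j)^2) \<le> norm (1 + (W s x j)^4)" by (simp add: power_mult[symmetric])
    qed
  qed
  then show ?thesis using wty_W[OF assms] unfolding goodW_def by simp
qed

lemma goodN_add: "goodN f \<Longrightarrow> goodN g \<Longrightarrow> goodN (\<lambda>\<omega>. f \<omega> + g \<omega>)"
  unfolding goodN_def by (auto intro!: nty_add) (metis abs_triangle_ineq add_mono order_trans)
lemma goodN_mult: assumes "goodN f" "goodN g" shows "goodN (\<lambda>\<omega>. f \<omega> * g \<omega>)"
proof -
  obtain B1 B2 where "\<forall>\<omega>\<in>space M. \<bar>f \<omega>\<bar> \<le> B1" "\<forall>\<omega>\<in>space M. \<bar>g \<omega>\<bar> \<le> B2"
    using assms unfolding goodN_def by blast
  then have "\<forall>\<omega>\<in>space M. \<bar>f \<omega> * g \<omega>\<bar> \<le> B1 * B2"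
    by (auto simp: abs_mult intro!: mult_mono)
  then show ?thesis using assms unfolding goodN_def by (auto intro: nty_mult)
qed
lemma goodN_const: "goodN (\<lambda>_. c)" unfolding goodN_def by (auto intro: nty_const)
lemma goodN_sum: "finite I \<Longrightarrow> (\<And>i. i \<in> I \<Longrightarrow> goodN (f i)) \<Longrightarrow> goodN (\<lambda>\<omega>. \<Sum>i\<in>I. f i \<omega>)"
  by (induction I rule: finite_induct) (auto intro: goodN_add goodN_const)
lemma goodN_nu: "goodN (\<lambda>\<omega>. nu s \<omega>)"
  unfolding goodN_def using nu_01 by (auto intro!: nty_nu exI[of _ 1]) (metis abs_0 abs_1 order_refl zero_le_one)

lemma indep_mult:
  assumes f: "goodN f" and g: "wty g" "integrable M g"
  shows "integrable M (\<lambda>\<omega>. f \<omega> * g \<omega>)"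
    "integral\<^sup>L M (\<lambda>\<omega>. f \<omega> * g \<omega>) = integral\<^sup>L M f * integral\<^sup>L M g"
proof -
  obtain hf where hf: "hf \<in> borel_measurable MN" "\<forall>\<omega>\<in>space M. f \<omega> = hf (Yn \<omega>)"
    using f unfolding goodN_def nty_def by blast
  obtain hg where hg: "hg \<in> borel_measurable MW" "\<forall>\<omega>\<in>space M. g \<omega> = hg (Yw \<omega>)"
    using g unfolding wty_def by blast
  have ind: "indep_var borel (hg \<circ> Yw) borel (hf \<circ> Yn)"
    by (rule indep_var_compose[OF indep' hg(1) hf(1)])
  have "integrable M g = integrable M (hg \<circ> Yw)" by (rule Bochner_Integration.integrable_cong) (use hg(2) in auto)
  then have ig: "integrable M (hg \<circ> Yw)" using g(2) by simp
  have "integrable M f = integrable M (hf \<circ> Yn)" by (rule Bochner_Integration.integrable_cong) (use hf(2) in auto)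
  then have if': "integrable M (hf \<circ> Yn)" using goodN_int[OF f] by simp
  have "integrable M (\<lambda>\<omega>. (hg \<circ> Yw) \<omega> * (hf \<circ> Yn) \<omega>)"
    by (rule indep_var_integrable[OF ind ig if'])
  moreover have "integrable M (\<lambda>\<omega>. (hg \<circ> Yw) \<omega> * (hf \<circ> Yn) \<omega>) = integrable M (\<lambda>\<omega>. f \<omega> * g \<omega>)"
    by (rule Bochner_Integration.integrable_cong) (use hf(2) hg(2) in auto)
  ultimately show "integrable M (\<lambda>\<omega>. f \<omega> * g \<omega>)" by simp
  have "integral\<^sup>L M (\<lambda>\<omega>. (hg \<circ> Yw) \<omega> * (hf \<circ> Yn) \<omega>) = integral\<^sup>L M (hg \<circ> Yw) * integral\<^sup>L M (hf \<circ> Yn)"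
    by (rule indep_var_lebesgue_integral[OF ind ig if'])
  moreover have "integral\<^sup>L M (\<lambda>\<omega>. (hg \<circ> Yw) \<omega> * (hf \<circ> Yn) \<omega>) = integral\<^sup>L M (\<lambda>\<omega>. f \<omega> * g \<omega>)"
    using hf(2) hg(2) by (intro Bochner_Integration.integral_cong) auto
  moreover have "integral\<^sup>L M (hg \<circ> Yw) = integral\<^sup>L M g" "integral\<^sup>L M (hf \<circ> Yn) = integral\<^sup>L M f"
    using hf(2) hg(2) by (auto intro!: Bochner_Integration.integral_cong)
  ultimately show "integral\<^sup>L M (\<lambda>\<omega>. f \<omega> * g \<omega>) = integral\<^sup>L M f * integral\<^sup>L M g" by (simp add: mult.commute)
qed

end


lemma mexp_carrier[simp]: "mexp M n k X \<in> carrier_mat n k" by (simp add: mexp_def)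
lemma mexp_dims[simp]: "dim_row (mexp M n k X) = n" "dim_col (mexp M n k X) = k"
  by (simp_all add: mexp_def)
lemma mexp_index[simp]: "i < n \<Longrightarrow> j < k \<Longrightarrow> mexp M n k X $$ (i,j) = integral\<^sup>L M (\<lambda>\<omega>. X \<omega> $$ (i, j))"
  by (simp add: mexp_def)

lemma mult_entry: "A \<in> carrier_mat n k \<Longrightarrow> B \<in> carrier_mat k l \<Longrightarrow> i < n \<Longrightarrow> j < l \<Longrightarrow>
  (A * B) $$ (i,j) = (\<Sum>a<k. A $$ (i,a) * B $$ (a,j))"
  by (simp add: scalar_prod_def atLeast0LessThan)

lemma mult_vec_entry: "A \<in> carrier_mat n k \<Longrightarrow> v \<in> carrier_vec k \<Longrightarrow> i < n \<Longrightarrow>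
  (A *\<^sub>v v) $ i = (\<Sum>a<k. A $$ (i,a) * v $ a)"
  by (simp add: scalar_prod_def atLeast0LessThan)

context tp3 begin

definition "wv n (u::'a \<Rightarrow> real vec) \<longleftrightarrow> (\<forall>\<omega>\<in>space M. u \<omega> \<in> carrier_vec n) \<and> (\<forall>i<n. goodW (\<lambda>\<omega>. u \<omega> $ i))"
definition "mz n (u::'a \<Rightarrow> real vec) \<longleftrightarrow> (\<forall>i<n. integral\<^sup>L M (\<lambda>\<omega>. u \<omega> $ i) = 0)"
definition "nm n k (P::'a \<Rightarrow> real mat) \<longleftrightarrow> (\<forall>\<omega>\<in>space M. P \<omega> \<in> carrier_mat n k) \<and> (\<forall>i<n. \<forall>j<k. goodN (\<lambda>\<omega>. P \<omega> $$ (i,j)))"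

lemma G2:
  assumes P: "nm n k P" and u: "wv n u" and v: "wv k v"
  shows "integrable M (\<lambda>\<omega>. u \<omega> \<bullet> (P \<omega> *\<^sub>v v \<omega>))"
    "integral\<^sup>L M (\<lambda>\<omega>. u \<omega> \<bullet> (P \<omega> *\<^sub>v v \<omega>)) = mtrace (mexp M n k P * mexp M k n (\<lambda>\<omega>. outer (v \<omega>) (u \<omega>)))"
proof -
  have eq: "u \<omega> \<bullet> (P \<omega> *\<^sub>v v \<omega>) = (\<Sum>i<n. \<Sum>j<k. P \<omega> $$ (i,j) * (u \<omega> $ i * v \<omega> $ j))"
    if "\<omega> \<in> space M" for \<omega>
    using P u v that unfolding nm_def wv_def
    by (auto simp: scalar_prod_def atLeast0LessThan sum_distrib_left mult_ac intro!: sum.cong)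
  have ij: "integrable M (\<lambda>\<omega>. P \<omega> $$ (i,j) * (u \<omega> $ i * v \<omega> $ j)) \<and>
      integral\<^sup>L M (\<lambda>\<omega>. P \<omega> $$ (i,j) * (u \<omega> $ i * v \<omega> $ j)) =
      integral\<^sup>L M (\<lambda>\<omega>. P \<omega> $$ (i,j)) * integral\<^sup>L M (\<lambda>\<omega>. u \<omega> $ i * v \<omega> $ j)"
    if "i < n" "j < k" for i j
  proof -
    have gN: "goodN (\<lambda>\<omega>. P \<omega> $$ (i,j))" using P that unfolding nm_def by auto
    have gu: "goodW (\<lambda>\<omega>. u \<omega> $ i)" and gv: "goodW (\<lambda>\<omega>. v \<omega> $ j)"
      using u v that unfolding wv_def by auto
    have w: "wty (\<lambda>\<omega>. u \<omega> $ i * v \<omega> $ j)" using gu gv unfolding goodW_def by (auto intro: wty_mult)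
    show ?thesis using indep_mult[OF gN w goodW_prod[OF gu gv]] by simp
  qed
  have "integrable M (\<lambda>\<omega>. \<Sum>i<n. \<Sum>j<k. P \<omega> $$ (i,j) * (u \<omega> $ i * v \<omega> $ j))"
    by (intro Bochner_Integration.integrable_sum) (use ij in auto)
  moreover have "integrable M (\<lambda>\<omega>. \<Sum>i<n. \<Sum>j<k. P \<omega> $$ (i,j) * (u \<omega> $ i * v \<omega> $ j))
      = integrable M (\<lambda>\<omega>. u \<omega> \<bullet> (P \<omega> *\<^sub>v v \<omega>))"
    by (rule Bochner_Integration.integrable_cong) (use eq in auto)
  ultimately show "integrable M (\<lambda>\<omega>. u \<omega> \<bullet> (P \<omega> *\<^sub>v v \<omega>))" by simp
  have "integral\<^sup>L M (\<lambda>\<omega>. u \<omega> \<bullet> (P \<omega> *\<^sub>v v \<omega>))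
      = integral\<^sup>L M (\<lambda>\<omega>. \<Sum>i<n. \<Sum>j<k. P \<omega> $$ (i,j) * (u \<omega> $ i * v \<omega> $ j))"
    by (rule Bochner_Integration.integral_cong) (use eq in auto)
  also have "\<dots> = (\<Sum>i<n. \<Sum>j<k. integral\<^sup>L M (\<lambda>\<omega>. P \<omega> $$ (i,j)) * integral\<^sup>L M (\<lambda>\<omega>. u \<omega> $ i * v \<omega> $ j))"
  proof -
    have "integral\<^sup>L M (\<lambda>\<omega>. \<Sum>i<n. \<Sum>j<k. P \<omega> $$ (i,j) * (u \<omega> $ i * v \<omega> $ j))
       = (\<Sum>i<n. integral\<^sup>L M (\<lambda>\<omega>. \<Sum>j<k. P \<omega> $$ (i,j) * (u \<omega> $ i * v \<omega> $ j)))"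
      by (rule Bochner_Integration.integral_sum) (intro Bochner_Integration.integrable_sum, use ij in auto)
    also have "\<dots> = (\<Sum>i<n. \<Sum>j<k. integral\<^sup>L M (\<lambda>\<omega>. P \<omega> $$ (i,j) * (u \<omega> $ i * v \<omega> $ j)))"
      by (intro sum.cong refl Bochner_Integration.integral_sum) (use ij in auto)
    finally show ?thesis using ij by simp
  qed
  also have "\<dots> = mtrace (mexp M n k P * mexp M k n (\<lambda>\<omega>. outer (v \<omega>) (u \<omega>)))"
  proof -
    have "integral\<^sup>L M (\<lambda>\<omega>. outer (v \<omega>) (u \<omega>) $$ (j, i)) = integral\<^sup>L M (\<lambda>\<omega>. u \<omega> $ i * v \<omega> $ j)"
      if "i < n" "j < k" for i j
    proof (rule Bochner_Integration.integral_cong)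
      fix x assume x: "x \<in> space M"
      have "dim_vec (v x) = k" "dim_vec (u x) = n" using u v x unfolding wv_def by auto
      then show "outer (v x) (u x) $$ (j, i) = u x $ i * v x $ j" using that by (simp add: outer_def)
    qed simp
    then show ?thesis by (simp add: mtrace_mult_sum[of _ n k])
  qed
  finally show "integral\<^sup>L M (\<lambda>\<omega>. u \<omega> \<bullet> (P \<omega> *\<^sub>v v \<omega>)) = mtrace (mexp M n k P * mexp M k n (\<lambda>\<omega>. outer (v \<omega>) (u \<omega>)))" .
qed


lemma goodN_cong: "goodN f \<Longrightarrow> (\<And>\<omega>. \<omega> \<in> space M \<Longrightarrow> f \<omega> = g \<omega>) \<Longrightarrow> goodN g"
  unfolding goodN_def nty_def by simp
lemma wty_cong: "wty f \<Longrightarrow> (\<And>\<omega>. \<omega> \<in> space M \<Longrightarrow> f \<omega> = g \<omega>) \<Longrightarrow> wty g"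
  unfolding wty_def by simp
lemma goodW_cong: assumes "goodW f" "\<And>\<omega>. \<omega> \<in> space M \<Longrightarrow> f \<omega> = g \<omega>" shows "goodW g"
proof -
  have "integrable M (\<lambda>\<omega>. (f \<omega>)^2) = integrable M (\<lambda>\<omega>. (g \<omega>)^2)"
    by (rule Bochner_Integration.integrable_cong) (use assms in auto)
  then show ?thesis using assms wty_cong unfolding goodW_def by blast
qed

lemma nm_const: "C \<in> carrier_mat n k \<Longrightarrow> nm n k (\<lambda>_. C)"
  unfolding nm_def by (auto intro: goodN_const)

lemma nm_mult: assumes "nm n k P" "nm k l P'" shows "nm n l (\<lambda>\<omega>. P \<omega> * P' \<omega>)"
  unfolding nm_def
proof (intro conjI allI impI ballI)
  fix \<omega> assume "\<omega> \<in> space M" then show "P \<omega> * P' \<omega> \<in> carrier_mat n l" using assms unfolding nm_def by auto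
next
  fix i j assume ij: "i < n" "j < l"
  have "goodN (\<lambda>\<omega>. \<Sum>a<k. P \<omega> $$ (i,a) * P' \<omega> $$ (a,j))"
    using assms ij unfolding nm_def by (intro goodN_sum goodN_mult) auto
  then show "goodN (\<lambda>\<omega>. (P \<omega> * P' \<omega>) $$ (i, j))"
  proof (rule goodN_cong)
    fix \<omega> assume "\<omega> \<in> space M"
    then have "P \<omega> \<in> carrier_mat n k" "P' \<omega> \<in> carrier_mat k l" using assms unfolding nm_def by auto
    then show "(\<Sum>a<k. P \<omega> $$ (i,a) * P' \<omega> $$ (a,j)) = (P \<omega> * P' \<omega>) $$ (i, j)"
      by (rule mult_entry[symmetric]) (use ij in auto)
  qed
qed

lemma nm_transpose: assumes "nm n k P" shows "nm k n (\<lambda>\<omega>. (P \<omega>)\<^sup>T)"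
  unfolding nm_def
proof (intro conjI allI impI ballI)
  fix \<omega> assume "\<omega> \<in> space M" then show "(P \<omega>)\<^sup>T \<in> carrier_mat k n" using assms unfolding nm_def by auto
next
  fix i j assume ij: "i < k" "j < n"
  show "goodN (\<lambda>\<omega>. (P \<omega>)\<^sup>T $$ (i, j))"
    by (rule goodN_cong[of "\<lambda>\<omega>. P \<omega> $$ (j,i)"]) (use assms ij in \<open>auto simp: nm_def\<close>)
qed

lemma wv_const: "c \<in> carrier_vec n \<Longrightarrow> wv n (\<lambda>_. c)"
  unfolding wv_def by (auto intro: goodW_const)

lemma wv_mult: assumes "C \<in> carrier_mat n k" "wv k u" shows "wv n (\<lambda>\<omega>. C *\<^sub>v u \<omega>)"
  unfolding wv_def
proof (intro conjI allI impI ballI)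
  fix \<omega> assume "\<omega> \<in> space M" then show "C *\<^sub>v u \<omega> \<in> carrier_vec n" using assms unfolding wv_def by auto
next
  fix i assume i: "i < n"
  have "goodW (\<lambda>\<omega>. \<Sum>a<k. C $$ (i,a) * u \<omega> $ a)"
    using assms i unfolding wv_def by (intro goodW_sum goodW_cmult) auto
  then show "goodW (\<lambda>\<omega>. (C *\<^sub>v u \<omega>) $ i)"
  proof (rule goodW_cong)
    fix \<omega> assume "\<omega> \<in> space M"
    then have "u \<omega> \<in> carrier_vec k" using assms unfolding wv_def by auto
    then show "(\<Sum>a<k. C $$ (i,a) * u \<omega> $ a) = (C *\<^sub>v u \<omega>) $ i" by (rule mult_vec_entry[OF assms(1) _ i, symmetric])
  qed
qed

lemma wv_int: "wv n u \<Longrightarrow> i < n \<Longrightarrow> integrable M (\<lambda>\<omega>. u \<omega> $ i)"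
  unfolding wv_def using goodW_int by auto

lemma mz_mult: assumes "C \<in> carrier_mat n k" "wv k u" "mz k u" shows "mz n (\<lambda>\<omega>. C *\<^sub>v u \<omega>)"
  unfolding mz_def
proof (intro allI impI)
  fix i assume i: "i < n"
  have "integral\<^sup>L M (\<lambda>\<omega>. (C *\<^sub>v u \<omega>) $ i) = integral\<^sup>L M (\<lambda>\<omega>. \<Sum>a<k. C $$ (i,a) * u \<omega> $ a)"
  proof (rule Bochner_Integration.integral_cong)
    fix \<omega> assume "\<omega> \<in> space M"
    then have "u \<omega> \<in> carrier_vec k" using assms unfolding wv_def by auto
    then show "(C *\<^sub>v u \<omega>) $ i = (\<Sum>a<k. C $$ (i,a) * u \<omega> $ a)" by (rule mult_vec_entry[OF assms(1) _ i])
  qed simp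
  also have "\<dots> = (\<Sum>a<k. C $$ (i,a) * integral\<^sup>L M (\<lambda>\<omega>. u \<omega> $ a))"
    using wv_int[OF assms(2)] by (subst Bochner_Integration.integral_sum) auto
  also have "\<dots> = 0" using assms(3) unfolding mz_def by simp
  finally show "integral\<^sup>L M (\<lambda>\<omega>. (C *\<^sub>v u \<omega>) $ i) = 0" .
qed

lemma goodN_int': "nm n k P \<Longrightarrow> i < n \<Longrightarrow> j < k \<Longrightarrow> integrable M (\<lambda>\<omega>. P \<omega> $$ (i,j))"
  unfolding nm_def using goodN_int by auto

lemma mexp_const: "C \<in> carrier_mat n k \<Longrightarrow> mexp M n k (\<lambda>_. C) = C"
  by (intro eq_matI) (auto simp: prob_space)

lemma mexp_left: assumes C: "C \<in> carrier_mat l n" and P: "nm n k P"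
  shows "mexp M l k (\<lambda>\<omega>. C * P \<omega>) = C * mexp M n k P"
proof (rule eq_matI)
  fix i j assume ij: "i < dim_row (C * mexp M n k P)" "j < dim_col (C * mexp M n k P)"
  then have ij: "i < l" "j < k" using C by auto
  have "integral\<^sup>L M (\<lambda>\<omega>. (C * P \<omega>) $$ (i,j)) = integral\<^sup>L M (\<lambda>\<omega>. \<Sum>a<n. C $$ (i,a) * P \<omega> $$ (a,j))"
  proof (rule Bochner_Integration.integral_cong)
    fix \<omega> assume "\<omega> \<in> space M"
    then have Pw: "P \<omega> \<in> carrier_mat n k" using P unfolding nm_def by auto
    show "(C * P \<omega>) $$ (i,j) = (\<Sum>a<n. C $$ (i,a) * P \<omega> $$ (a,j))"
      by (rule mult_entry[OF C Pw]) (use ij in auto)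
  qed simp
  also have "\<dots> = (\<Sum>a<n. C $$ (i,a) * integral\<^sup>L M (\<lambda>\<omega>. P \<omega> $$ (a,j)))"
    using goodN_int'[OF P] ij by (subst Bochner_Integration.integral_sum) auto
  finally show "mexp M l k (\<lambda>\<omega>. C * P \<omega>) $$ (i, j) = (C * mexp M n k P) $$ (i, j)"
    using C ij by (subst mult_entry[OF C mexp_carrier]) auto
qed (use C in auto)

lemma mexp_right: assumes C: "C \<in> carrier_mat k l" and P: "nm n k P"
  shows "mexp M n l (\<lambda>\<omega>. P \<omega> * C) = mexp M n k P * C"
proof (rule eq_matI)
  fix i j assume ij: "i < dim_row (mexp M n k P * C)" "j < dim_col (mexp M n k P * C)"
  then have ij: "i < n" "j < l" using C by auto
  have "integral\<^sup>L M (\<lambda>\<omega>. (P \<omega> * C) $$ (i,j)) = integral\<^sup>L M (\<lambda>\<omega>. \<Sum>a<k. P \<omega> $$ (i,a) * C $$ (a,j))"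
  proof (rule Bochner_Integration.integral_cong)
    fix \<omega> assume "\<omega> \<in> space M"
    then have "P \<omega> \<in> carrier_mat n k" using P unfolding nm_def by auto
    then show "(P \<omega> * C) $$ (i,j) = (\<Sum>a<k. P \<omega> $$ (i,a) * C $$ (a,j))"
      by (rule mult_entry) (use ij C in auto)
  qed simp
  also have "\<dots> = (\<Sum>a<k. integral\<^sup>L M (\<lambda>\<omega>. P \<omega> $$ (i,a)) * C $$ (a,j))"
    using goodN_int'[OF P] ij by (subst Bochner_Integration.integral_sum) auto
  finally show "mexp M n l (\<lambda>\<omega>. P \<omega> * C) $$ (i, j) = (mexp M n k P * C) $$ (i, j)"
    using C ij by (subst mult_entry[OF mexp_carrier C]) auto
qed (use C in auto)

lemma mexp_transpose: assumes P: "nm n k P"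
  shows "mexp M k n (\<lambda>\<omega>. (P \<omega>)\<^sup>T) = (mexp M n k P)\<^sup>T"
proof (rule eq_matI)
  fix i j assume ij: "i < dim_row (mexp M n k P)\<^sup>T" "j < dim_col (mexp M n k P)\<^sup>T"
  then have ij: "i < k" "j < n" by auto
  have "integral\<^sup>L M (\<lambda>\<omega>. (P \<omega>)\<^sup>T $$ (i,j)) = integral\<^sup>L M (\<lambda>\<omega>. P \<omega> $$ (j,i))"
    by (rule Bochner_Integration.integral_cong) (use P ij in \<open>auto simp: nm_def\<close>)
  then show "mexp M k n (\<lambda>\<omega>. (P \<omega>)\<^sup>T) $$ (i, j) = (mexp M n k P)\<^sup>T $$ (i, j)"
    using ij by simp
qed auto


lemma mexp_outer_zero: assumes v: "wv k v" "mz k v" and c: "c \<in> carrier_vec n"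
  shows "mexp M k n (\<lambda>\<omega>. outer (v \<omega>) c) = 0\<^sub>m k n"
proof (rule eq_matI)
  fix i j assume ij: "i < dim_row (0\<^sub>m k n :: real mat)" "j < dim_col (0\<^sub>m k n :: real mat)"
  then have ij: "i < k" "j < n" by auto
  have "integral\<^sup>L M (\<lambda>\<omega>. outer (v \<omega>) c $$ (i,j)) = integral\<^sup>L M (\<lambda>\<omega>. v \<omega> $ i * c $ j)"
  proof (rule Bochner_Integration.integral_cong)
    fix x assume x: "x \<in> space M"
    have "dim_vec (v x) = k" using v x unfolding wv_def by auto
    then show "outer (v x) c $$ (i, j) = v x $ i * c $ j" using c ij by (simp add: outer_def)
  qed simp
  also have "\<dots> = 0" using v ij unfolding mz_def by simp
  finally show "mexp M k n (\<lambda>\<omega>. outer (v \<omega>) c) $$ (i, j) = 0\<^sub>m k n $$ (i, j)" using ij by simp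
qed auto

lemma mexp_outer: assumes C: "C \<in> carrier_mat n k" and C': "C' \<in> carrier_mat m l"
  and Y: "wv k Y" and Z: "wv l Z"
  shows "mexp M n m (\<lambda>\<omega>. outer (C *\<^sub>v Y \<omega>) (C' *\<^sub>v Z \<omega>))
       = C * mexp M k l (\<lambda>\<omega>. outer (Y \<omega>) (Z \<omega>)) * C'\<^sup>T"
proof (rule eq_matI)
  have R: "C * mexp M k l (\<lambda>\<omega>. outer (Y \<omega>) (Z \<omega>)) * C'\<^sup>T \<in> carrier_mat n m"
    by (rule mult_carrier_mat[OF mult_carrier_mat[OF C mexp_carrier]]) (use C' in simp)
  fix i j assume ij: "i < dim_row (C * mexp M k l (\<lambda>\<omega>. outer (Y \<omega>) (Z \<omega>)) * C'\<^sup>T)"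
    "j < dim_col (C * mexp M k l (\<lambda>\<omega>. outer (Y \<omega>) (Z \<omega>)) * C'\<^sup>T)"
  then have ij: "i < n" "j < m" using R by auto
  have int: "integrable M (\<lambda>\<omega>. Y \<omega> $ a * Z \<omega> $ b)" if "a < k" "b < l" for a b
    using Y Z that unfolding wv_def by (auto intro: goodW_prod)
  have E: "integral\<^sup>L M (\<lambda>\<omega>. outer (Y \<omega>) (Z \<omega>) $$ (a,b)) = integral\<^sup>L M (\<lambda>\<omega>. Y \<omega> $ a * Z \<omega> $ b)"
    if "a < k" "b < l" for a b
  proof (rule Bochner_Integration.integral_cong)
    fix x assume x: "x \<in> space M"
    have "dim_vec (Y x) = k" "dim_vec (Z x) = l" using Y Z x unfolding wv_def by auto
    then show "outer (Y x) (Z x) $$ (a, b) = Y x $ a * Z x $ b" using that by (simp add: outer_def)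
  qed simp
  have "integral\<^sup>L M (\<lambda>\<omega>. outer (C *\<^sub>v Y \<omega>) (C' *\<^sub>v Z \<omega>) $$ (i,j))
      = integral\<^sup>L M (\<lambda>\<omega>. \<Sum>a<k. \<Sum>b<l. C $$ (i,a) * C' $$ (j,b) * (Y \<omega> $ a * Z \<omega> $ b))"
  proof (rule Bochner_Integration.integral_cong)
    fix x assume x: "x \<in> space M"
    have Yx: "Y x \<in> carrier_vec k" and Zx: "Z x \<in> carrier_vec l" using Y Z x unfolding wv_def by auto
    have "outer (C *\<^sub>v Y x) (C' *\<^sub>v Z x) $$ (i,j) = (C *\<^sub>v Y x) $ i * (C' *\<^sub>v Z x) $ j"
      using C C' Yx Zx ij by (simp add: outer_def)
    also have "\<dots> = (\<Sum>a<k. C $$ (i,a) * Y x $ a) * (\<Sum>b<l. C' $$ (j,b) * Z x $ b)"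
      by (simp only: mult_vec_entry[OF C Yx ij(1)] mult_vec_entry[OF C' Zx ij(2)])
    also have "\<dots> = (\<Sum>a<k. \<Sum>b<l. C $$ (i,a) * C' $$ (j,b) * (Y x $ a * Z x $ b))"
      by (simp add: sum_product mult_ac)
    finally show "outer (C *\<^sub>v Y x) (C' *\<^sub>v Z x) $$ (i,j) = (\<Sum>a<k. \<Sum>b<l. C $$ (i,a) * C' $$ (j,b) * (Y x $ a * Z x $ b))" .
  qed simp
  also have "\<dots> = (\<Sum>a<k. \<Sum>b<l. C $$ (i,a) * C' $$ (j,b) * integral\<^sup>L M (\<lambda>\<omega>. Y \<omega> $ a * Z \<omega> $ b))"
  proof -
    have "integral\<^sup>L M (\<lambda>\<omega>. \<Sum>a<k. \<Sum>b<l. C $$ (i,a) * C' $$ (j,b) * (Y \<omega> $ a * Z \<omega> $ b))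
       = (\<Sum>a<k. integral\<^sup>L M (\<lambda>\<omega>. \<Sum>b<l. C $$ (i,a) * C' $$ (j,b) * (Y \<omega> $ a * Z \<omega> $ b)))"
      by (rule Bochner_Integration.integral_sum) (intro Bochner_Integration.integrable_sum, use int in auto)
    also have "\<dots> = (\<Sum>a<k. \<Sum>b<l. integral\<^sup>L M (\<lambda>\<omega>. C $$ (i,a) * C' $$ (j,b) * (Y \<omega> $ a * Z \<omega> $ b)))"
      by (intro sum.cong refl Bochner_Integration.integral_sum) (use int in auto)
    finally show ?thesis by simp
  qed
  also have "\<dots> = (C * mexp M k l (\<lambda>\<omega>. outer (Y \<omega>) (Z \<omega>)) * C'\<^sup>T) $$ (i, j)"
  proof -
    have "(C * mexp M k l (\<lambda>\<omega>. outer (Y \<omega>) (Z \<omega>)) * C'\<^sup>T) $$ (i, j)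
        = (\<Sum>b<l. (C * mexp M k l (\<lambda>\<omega>. outer (Y \<omega>) (Z \<omega>))) $$ (i,b) * C'\<^sup>T $$ (b,j))"
      by (rule mult_entry) (use C C' ij in auto)
    also have "\<dots> = (\<Sum>b<l. (\<Sum>a<k. C $$ (i,a) * integral\<^sup>L M (\<lambda>\<omega>. Y \<omega> $ a * Z \<omega> $ b)) * C' $$ (j,b))"
    proof (intro sum.cong refl)
      fix b assume b: "b \<in> {..<l}"
      have "(C * mexp M k l (\<lambda>\<omega>. outer (Y \<omega>) (Z \<omega>))) $$ (i,b)
          = (\<Sum>a<k. C $$ (i,a) * mexp M k l (\<lambda>\<omega>. outer (Y \<omega>) (Z \<omega>)) $$ (a,b))"
        by (rule mult_entry) (use C ij b in auto)
      also have "\<dots> = (\<Sum>a<k. C $$ (i,a) * integral\<^sup>L M (\<lambda>\<omega>. Y \<omega> $ a * Z \<omega> $ b))"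
        using E b by (intro sum.cong refl) auto
      finally show "(C * mexp M k l (\<lambda>\<omega>. outer (Y \<omega>) (Z \<omega>))) $$ (i,b) * C'\<^sup>T $$ (b,j)
          = (\<Sum>a<k. C $$ (i,a) * integral\<^sup>L M (\<lambda>\<omega>. Y \<omega> $ a * Z \<omega> $ b)) * C' $$ (j,b)"
        using C' ij b by simp
    qed
    also have "\<dots> = (\<Sum>a<k. \<Sum>b<l. C $$ (i,a) * C' $$ (j,b) * integral\<^sup>L M (\<lambda>\<omega>. Y \<omega> $ a * Z \<omega> $ b))"
      by (subst sum.swap) (simp add: sum_distrib_left sum_distrib_right mult_ac)
    finally show ?thesis by simp
  qed
  finally show "mexp M n m (\<lambda>\<omega>. outer (C *\<^sub>v Y \<omega>) (C' *\<^sub>v Z \<omega>)) $$ (i, j)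
      = (C * mexp M k l (\<lambda>\<omega>. outer (Y \<omega>) (Z \<omega>)) * C'\<^sup>T) $$ (i, j)"
    using ij by simp
qed (use C C' in auto)

end


lemma sum_block: fixes g :: "nat \<Rightarrow> 'b::comm_monoid_add" shows "sum g {..<n*k} = (\<Sum>b<n. \<Sum>a<k. g (b*k + a))"
proof -
  have "sum g {..<n*k} = (\<Sum>b<n. sum g {b*k..<b*k+k})" using sum.nat_group[of g k n] by simp
  also have "\<dots> = (\<Sum>b<n. \<Sum>a<k. g (b*k + a))"
  proof -
    have "\<And>b. sum g {b*k..<b*k+k} = (\<Sum>a<k. g (b*k + a))"
      using sum.shift_bounds_nat_ivl[of g 0 _ k] by (simp add: atLeast0LessThan add.commute[of k] add.commute[of _ "_ * k"])
    then show ?thesis by simp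
  qed
  finally show ?thesis .
qed

context tp3 begin

lemma goodN_prod: "finite I \<Longrightarrow> (\<And>i. i \<in> I \<Longrightarrow> goodN (f i)) \<Longrightarrow> goodN (\<lambda>\<omega>. \<Prod>i\<in>I. f i \<omega>)"
  by (induction I rule: finite_induct) (auto intro: goodN_mult goodN_const)

lemma goodN_1nu: "goodN (\<lambda>\<omega>. 1 - nu s \<omega>)"
proof -
  have "goodN (\<lambda>\<omega>. 1 + (-1) * nu s \<omega>)" by (rule goodN_add[OF goodN_const goodN_mult[OF goodN_const goodN_nu]])
  then show ?thesis by (rule goodN_cong) simp
qed

lemma goodN_rho: "goodN (\<lambda>\<omega>. rho nu t l \<omega>)"
proof (induction l)
  case 0 then show ?case by (simp add: goodN_nu)
next
  case (Suc l)
  have p: "goodN (\<lambda>\<omega>. \<Prod>s\<le>l. 1 - nu (t + s) \<omega>)"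
    by (rule goodN_prod) (auto intro: goodN_1nu)
  show ?case unfolding rho.simps by (rule goodN_add[OF Suc.IH goodN_mult[OF p goodN_nu]])
qed

lemma nm_S: "nm (N*m) (N*m) (Smat m N \<kappa> nu t)"
  unfolding nm_def
proof (intro conjI allI impI ballI)
  fix i j assume ij: "i < N * m" "j < N * m"
  show "goodN (\<lambda>\<omega>. Smat m N \<kappa> nu t \<omega> $$ (i, j))"
  proof (cases "i = j \<and> i div m < \<kappa>")
    case True
    show ?thesis by (rule goodN_cong[OF goodN_nu[of "t + i div m"]]) (use ij True in \<open>auto simp add: Smat_def\<close>)
  next
    case False
    show ?thesis by (rule goodN_cong[OF goodN_const[of "if i = j then 1 else 0"]]) (use ij False in \<open>auto simp add: Smat_def\<close>)
  qed
qed (simp add: Smat_def)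

lemma nm_G: "nm (N*m) (N*m) (Gmat m N \<kappa> nu t)"
  unfolding nm_def
proof (intro conjI allI impI ballI)
  fix i j assume ij: "i < N * m" "j < N * m"
  show "goodN (\<lambda>\<omega>. Gmat m N \<kappa> nu t \<omega> $$ (i, j))"
  proof (cases "i = j \<and> i div m < \<kappa>")
    case True
    show ?thesis by (rule goodN_cong[OF goodN_rho[of t "i div m"]]) (use ij True in \<open>auto simp add: Gmat_def\<close>)
  next
    case False
    show ?thesis by (rule goodN_cong[OF goodN_const[of "if i = j then 1 else 0"]]) (use ij False in \<open>auto simp add: Gmat_def\<close>)
  qed
qed (simp add: Gmat_def)

lemma wv_X: "wv (N*d) (wstack d N W t)"
  unfolding wv_def
proof (intro conjI allI impI ballI)
  fix i assume i: "i < N * d"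
  then have "i mod d < d" by (cases "d = 0") auto
  then have "goodW (\<lambda>\<omega>. W (t + i div d) \<omega> (i mod d))" by (rule goodW_W)
  then show "goodW (\<lambda>\<omega>. wstack d N W t \<omega> $ i)"
    by (rule goodW_cong) (use i in \<open>simp add: wstack_def\<close>)
qed (simp add: wstack_def)

lemma mz_X: "mz (N*d) (wstack d N W t)"
  unfolding mz_def
proof (intro allI impI)
  fix i assume i: "i < N * d"
  then have "i mod d < d" by (cases "d = 0") auto
  then show "integral\<^sup>L M (\<lambda>\<omega>. wstack d N W t \<omega> $ i) = 0"
    using w_mean i by (simp add: wstack_def)
qed

lemma wv_F: "wv ((N-1)*d) (phistack d N phi W t)"
  unfolding wv_def
proof (intro conjI allI impI ballI)
  fix i assume i: "i < (N - 1) * d"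
  then have d: "i mod d < d" by (cases "d = 0") auto
  have b: "1 \<le> i div d + 1" "i div d + 1 \<le> N - 1"
    using i by (auto simp: less_mult_imp_div_less Suc_leI)
  have "goodW (\<lambda>\<omega>. phi (i div d + 1) (wvec d W (t + i div d) \<omega>) $ (i mod d))"
    by (rule goodW_bnd[OF wty_phi[OF b d], where B=phimax]) (use phi_bound[OF b _ d] in \<open>auto simp: wvec_def\<close>)
  then show "goodW (\<lambda>\<omega>. phistack d N phi W t \<omega> $ i)"
    by (rule goodW_cong) (use i in \<open>simp add: phistack_def\<close>)
qed (simp add: phistack_def)

lemma mz_F: "mz ((N-1)*d) (phistack d N phi W t)"
  unfolding mz_def
proof (intro allI impI)
  fix i assume i: "i < (N - 1) * d"
  then have d: "i mod d < d" by (cases "d = 0") auto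
  have b: "1 \<le> i div d + 1" "i div d + 1 \<le> N - 1"
    using i by (auto simp: less_mult_imp_div_less Suc_leI)
  show "integral\<^sup>L M (\<lambda>\<omega>. phistack d N phi W t \<omega> $ i) = 0"
    using phi_mean[OF b d] i by (simp add: phistack_def)
qed

end


lemma calA_carrier[simp]: "calA N d A \<in> carrier_mat ((N+1)*d) d" by (simp add: calA_def blockmat_def)
lemma calB_carrier[simp]: "calB N d m A B \<in> carrier_mat ((N+1)*d) (N*m)" by (simp add: calB_def blockmat_def)
lemma calD_carrier[simp]: "calD N d A \<in> carrier_mat ((N+1)*d) (N*d)" by (simp add: calD_def blockmat_def)
lemma calQ_carrier[simp]: "calQ N d Q Qf \<in> carrier_mat ((N+1)*d) ((N+1)*d)" by (simp add: calQ_def blockmat_def)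
lemma calR_carrier[simp]: "calR N m R \<in> carrier_mat (N*m) (N*m)" by (simp add: calR_def blockmat_def)

lemma block_lt: assumes "b < (nb::nat)" "a < r" shows "b*r + a < nb*r"
proof -
  have "b*r + a < (b+1)*r" using assms by simp
  also have "(b+1)*r \<le> nb*r" using assms by (intro mult_right_mono) auto
  finally show ?thesis .
qed

lemma qform_double:
  assumes "P \<in> carrier_mat n n" "v \<in> carrier_vec n"
  shows "qform P v = (\<Sum>i<n. \<Sum>j<n. v $ i * P $$ (i,j) * v $ j)"
  using assms by (simp add: qform_def scalar_prod_def atLeast0LessThan sum_distrib_left mult_ac)

lemma qform_blockdiag:
  fixes F :: "nat \<Rightarrow> real mat"
  assumes F: "\<And>b. b < nb \<Longrightarrow> F b \<in> carrier_mat r r" and v: "v \<in> carrier_vec (nb*r)"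
  shows "qform (blockmat r r nb nb (\<lambda>i j. if i = j then F i else 0\<^sub>m r r)) v
       = (\<Sum>b<nb. qform (F b) (vec r (\<lambda>a. v $ (b*r + a))))"
proof -
  let ?B = "blockmat r r nb nb (\<lambda>i j. if i = j then F i else 0\<^sub>m r r)"
  have B: "?B \<in> carrier_mat (nb*r) (nb*r)" by (simp add: blockmat_def)
  have ent: "?B $$ (b*r + a, b'*r + a') = (if b = b' then F b $$ (a, a') else 0)"
    if "b < nb" "b' < nb" "a < r" "a' < r" for b b' a a'
  proof -
    have lt: "b*r + a < nb*r" "b'*r + a' < nb*r" using that by (auto intro: block_lt)
    then show ?thesis using that by (simp add: blockmat_def)
  qed
  have "qform ?B v = (\<Sum>i<nb*r. \<Sum>j<nb*r. v $ i * ?B $$ (i,j) * v $ j)"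
    by (rule qform_double[OF B v])
  also have "\<dots> = (\<Sum>b<nb. \<Sum>a<r. \<Sum>b'<nb. \<Sum>a'<r.
       v $ (b*r+a) * ?B $$ (b*r+a, b'*r+a') * v $ (b'*r+a'))"
    by (simp add: sum_block)
  also have "\<dots> = (\<Sum>b<nb. \<Sum>a<r. \<Sum>b'<nb. \<Sum>a'<r.
       (if b = b' then v $ (b*r+a) * F b $$ (a, a') * v $ (b*r+a') else 0))"
    by (intro sum.cong refl) (simp add: ent)
  also have "\<dots> = (\<Sum>b<nb. \<Sum>a<r. \<Sum>a'<r. v $ (b*r+a) * F b $$ (a, a') * v $ (b*r+a'))"
  proof (rule sum.cong[OF refl], rule sum.cong[OF refl])
    fix b a assume b: "b \<in> {..<nb}" and a: "a \<in> {..<r}"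
    have "\<And>b'. (\<Sum>a'<r. (if b = b' then v $ (b*r+a) * F b $$ (a, a') * v $ (b*r+a') else 0))
       = (if b = b' then (\<Sum>a'<r. v $ (b*r+a) * F b $$ (a, a') * v $ (b*r+a')) else 0)" by simp
    then show "(\<Sum>b'<nb. \<Sum>a'<r. (if b = b' then v $ (b*r+a) * F b $$ (a, a') * v $ (b*r+a') else 0))
      = (\<Sum>a'<r. v $ (b*r+a) * F b $$ (a, a') * v $ (b*r+a'))" using b by simp
  qed
  also have "\<dots> = (\<Sum>b<nb. qform (F b) (vec r (\<lambda>a. v $ (b*r + a))))"
    by (intro sum.cong refl) (simp add: qform_double[OF F])
  finally show ?thesis .
qed


lemma calQ_psd:
  assumes Q: "sym_psd d Q" and Qf: "sym_psd d Qf" and v: "v \<in> carrier_vec ((N+1)*d)"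
  shows "qform (calQ N d Q Qf) v \<ge> 0"
proof -
  have "qform (calQ N d Q Qf) v = (\<Sum>b<N+1. qform (if b = N then Qf else Q) (vec d (\<lambda>a. v $ (b*d + a))))"
    unfolding calQ_def
    using qform_blockdiag[of "N+1" "\<lambda>i. if i = N then Qf else Q" d v] Q Qf v by (simp add: sym_psd_def)
  also have "\<dots> \<ge> 0" using Q Qf unfolding sym_psd_def by (intro sum_nonneg) auto
  finally show ?thesis .
qed

lemma calR_psd:
  assumes R: "sym_pd m R" and v: "v \<in> carrier_vec (N*m)"
  shows "qform (calR N m R) v \<ge> 0"
proof -
  have "qform (calR N m R) v = (\<Sum>b<N. qform R (vec m (\<lambda>a. v $ (b*m + a))))"
    unfolding calR_def
    using qform_blockdiag[of N "\<lambda>i. R" m v] R v by (simp add: sym_pd_def)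
  also have "\<dots> \<ge> 0"
  proof (intro sum_nonneg)
    fix b
    let ?w = "vec m (\<lambda>a. v $ (b*m + a))"
    show "0 \<le> qform R ?w"
    proof (cases "?w = 0\<^sub>v m")
      case True then show ?thesis using R by (auto simp: qform_def sym_pd_def)
    next
      case False then show ?thesis using R unfolding sym_pd_def by (auto intro: less_imp_le)
    qed
  qed
  finally show ?thesis .
qed

lemma calQ_sym:
  assumes Q: "sym_psd d Q" and Qf: "sym_psd d Qf"
  shows "(calQ N d Q Qf)\<^sup>T = calQ N d Q Qf"
proof (rule eq_matI)
  fix i j assume ij: "i < dim_row (calQ N d Q Qf)" "j < dim_col (calQ N d Q Qf)"
  then have ij: "i < (N+1)*d" "j < (N+1)*d" by (simp_all add: calQ_def blockmat_def)
  then have d: "i mod d < d" "j mod d < d" by (cases "d = 0"; auto)+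
  have symQ: "Q $$ (a,b) = Q $$ (b,a)" "Qf $$ (a,b) = Qf $$ (b,a)" if "a < d" "b < d" for a b
  proof -
    have c: "Q \<in> carrier_mat d d" "Qf \<in> carrier_mat d d" and t: "Q\<^sup>T = Q" "Qf\<^sup>T = Qf"
      using Q Qf unfolding sym_psd_def by auto
    have "Q\<^sup>T $$ (a,b) = Q $$ (b,a)" "Qf\<^sup>T $$ (a,b) = Qf $$ (b,a)" using c that by auto
    then show "Q $$ (a,b) = Q $$ (b,a)" "Qf $$ (a,b) = Qf $$ (b,a)" using t by simp_all
  qed
  show "(calQ N d Q Qf)\<^sup>T $$ (i, j) = calQ N d Q Qf $$ (i, j)"
    using ij d symQ by (simp add: calQ_def blockmat_def)
qed (simp_all add: calQ_def blockmat_def)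

lemma qform_convex:
  fixes P :: "real mat"
  assumes P: "P \<in> carrier_mat n n" and psd: "\<And>w. w \<in> carrier_vec n \<Longrightarrow> qform P w \<ge> 0"
    and x: "x \<in> carrier_vec n" and y: "y \<in> carrier_vec n" and a: "0 \<le> a" "a \<le> 1"
  shows "qform P (a \<cdot>\<^sub>v x + (1 - a) \<cdot>\<^sub>v y) \<le> a * qform P x + (1 - a) * qform P y"
proof -
  have z: "a \<cdot>\<^sub>v x + (1 - a) \<cdot>\<^sub>v y \<in> carrier_vec n" "x - y \<in> carrier_vec n" using x y by auto
  have "qform P (a \<cdot>\<^sub>v x + (1 - a) \<cdot>\<^sub>v y) = (\<Sum>i<n. \<Sum>j<n. (a * x $ i + (1-a) * y $ i) * P $$ (i,j) * (a * x $ j + (1-a) * y $ j))"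
    using qform_double[OF P z(1)] x y by simp
  also have "\<dots> = (\<Sum>i<n. \<Sum>j<n. a * (x $ i * P $$ (i,j) * x $ j) + (1-a) * (y $ i * P $$ (i,j) * y $ j)
        - a * (1 - a) * ((x $ i - y $ i) * P $$ (i,j) * (x $ j - y $ j)))"
    by (intro sum.cong refl) (simp add: algebra_simps)
  also have "\<dots> = a * qform P x + (1 - a) * qform P y - a * (1 - a) * qform P (x - y)"
    using qform_double[OF P x] qform_double[OF P y] qform_double[OF P z(2)] x y
    by (simp add: sum.distrib sum_subtractf sum_distrib_left)
  also have "\<dots> \<le> a * qform P x + (1 - a) * qform P y"
    using psd[OF z(2)] a by (simp add: mult_nonneg_nonneg)
  finally show ?thesis .
qed



lemma mtrace_zero: "A \<in> carrier_mat n k \<Longrightarrow> mtrace (A * 0\<^sub>m k n) = 0"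
  by (simp add: mtrace_def)

lemma mtrace_0[simp]: "mtrace (0\<^sub>m n n) = 0" by (simp add: mtrace_def)

lemma trace_cyc3:
  assumes A: "A \<in> carrier_mat n k" and B: "B \<in> carrier_mat k l" and C: "C \<in> carrier_mat l n"
  shows "mtrace (A * (B * C)) = mtrace (C * A * B)"
proof -
  have "A * (B * C) = (A * B) * C" using assoc_mult_mat[OF A B C] by simp
  moreover have "mtrace ((A * B) * C) = mtrace (C * (A * B))"
    by (rule mtrace_comm[of _ n l]) (use A B C in auto)
  moreover have "C * (A * B) = C * A * B" using assoc_mult_mat[OF C A B] by simp
  ultimately show ?thesis by simp
qed

context tp3 begin

lemma mexp_cong: "(\<And>\<omega>. \<omega> \<in> space M \<Longrightarrow> X \<omega> = Y \<omega>) \<Longrightarrow> mexp M n k X = mexp M n k Y"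
  unfolding mexp_def by (intro eq_matI) (auto intro!: Bochner_Integration.integral_cong)

lemma mexp_outer_zero2: assumes v: "wv k v" "mz k v" and c: "c \<in> carrier_vec n"
  shows "mexp M n k (\<lambda>\<omega>. outer c (v \<omega>)) = 0\<^sub>m n k"
proof (rule eq_matI)
  fix i j assume ij: "i < dim_row (0\<^sub>m n k :: real mat)" "j < dim_col (0\<^sub>m n k :: real mat)"
  then have ij: "i < n" "j < k" by auto
  have "integral\<^sup>L M (\<lambda>\<omega>. outer c (v \<omega>) $$ (i,j)) = integral\<^sup>L M (\<lambda>\<omega>. c $ i * v \<omega> $ j)"
  proof (rule Bochner_Integration.integral_cong)
    fix x assume x: "x \<in> space M"
    have "dim_vec (v x) = k" using v x unfolding wv_def by auto
    then show "outer c (v x) $$ (i, j) = c $ i * v x $ j" using c ij by (simp add: outer_def)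
  qed simp
  also have "\<dots> = 0" using v ij unfolding mz_def by simp
  finally show "mexp M n k (\<lambda>\<omega>. outer c (v \<omega>)) $$ (i, j) = 0\<^sub>m n k $$ (i, j)" using ij by simp
qed auto


lemma main_eq:
  fixes m \<kappa> t :: nat and A B Q Qf R Th :: "real mat" and xt eta :: "real vec"
  assumes Q: "sym_psd d Q" and Qf: "sym_psd d Qf" and xt: "xt \<in> carrier_vec d"
    and eta: "eta \<in> carrier_vec (N*m)" and Th: "Th \<in> carrier_mat (N*m) ((N-1)*d)"
  shows "integrable M (\<lambda>\<omega>. qform (calQ N d Q Qf) (xtraj d m N \<kappa> A B phi W nu t xt eta Th \<omega>)
                    + qform (calR N m R) (uapplied d m N \<kappa> phi W nu t eta Th \<omega>))"
    "Jcost M d m N \<kappa> A B Q Qf R phi W nu t xt eta Th = Jtract M d m N \<kappa> A B Q Qf R phi W nu t xt eta Th"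
proof -
  let ?CA = "calA N d A" and ?CB = "calB N d m A B" and ?CD = "calD N d A" and ?CQ = "calQ N d Q Qf"
    and ?CR = "calR N m R" and ?G = "Gmat m N \<kappa> nu t" and ?S = "Smat m N \<kappa> nu t"
    and ?F = "phistack d N phi W t" and ?X = "wstack d N W t"
    and ?MM = "Mmat d m N A B Q Qf R" and ?K = "(calB N d m A B)\<^sup>T * calQ N d Q Qf * calD N d A"
  let ?pd = "(N+1)*d" and ?q = "N*m" and ?r = "N*d" and ?s = "(N-1)*d"
  have CA: "?CA \<in> carrier_mat ?pd d" and CB: "?CB \<in> carrier_mat ?pd ?q" and CD: "?CD \<in> carrier_mat ?pd ?r"
    and CQ: "?CQ \<in> carrier_mat ?pd ?pd" and CR: "?CR \<in> carrier_mat ?q ?q"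
    by (rule calA_carrier calB_carrier calD_carrier calQ_carrier calR_carrier)+
  have CQs: "?CQ\<^sup>T = ?CQ" by (rule calQ_sym[OF Q Qf])
  have MM: "?MM \<in> carrier_mat ?q ?q" unfolding Mmat_def using CB CQ CR by simp
  have K: "?K \<in> carrier_mat ?q ?r" using CB CQ CD by simp
  have P2: "?CD\<^sup>T * ?CQ * ?CD \<in> carrier_mat ?r ?r" using CQ CD by simp
  have P3: "?CA\<^sup>T * ?CQ * ?CD \<in> carrier_mat d ?r" using CA CQ CD by simp
  have C4: "?CA\<^sup>T * ?CQ * ?CB \<in> carrier_mat d ?q" using CA CQ CB by simp
  have P1: "?CA\<^sup>T * ?CQ * ?CA \<in> carrier_mat d d" using CA CQ by simp
  have Gc: "?G \<omega> \<in> carrier_mat ?q ?q" and Sc: "?S \<omega> \<in> carrier_mat ?q ?q" for \<omega>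
    by (simp_all add: Gmat_def Smat_def)
  have Fc: "?F \<omega> \<in> carrier_vec ?s" and Xc: "?X \<omega> \<in> carrier_vec ?r" for \<omega>
    by (simp_all add: phistack_def wstack_def)
  have wvf: "wv ?q (\<lambda>\<omega>. Th *\<^sub>v ?F \<omega>)" by (rule wv_mult[OF Th wv_F])
  have mzf: "mz ?q (\<lambda>\<omega>. Th *\<^sub>v ?F \<omega>)" by (rule mz_mult[OF Th wv_F mz_F])
  have pw: "qform ?CQ (xtraj d m N \<kappa> A B phi W nu t xt eta Th \<omega>) + qform ?CR (uapplied d m N \<kappa> phi W nu t eta Th \<omega>) =
     xt \<bullet> ((?CA\<^sup>T * ?CQ * ?CA) *\<^sub>v xt) + ?X \<omega> \<bullet> ((?CD\<^sup>T * ?CQ * ?CD) *\<^sub>v ?X \<omega>)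
     + 2 * (xt \<bullet> ((?CA\<^sup>T * ?CQ * ?CD) *\<^sub>v ?X \<omega>))
     + 2 * (xt \<bullet> ((?CA\<^sup>T * ?CQ * ?CB * ?G \<omega>) *\<^sub>v eta)) + 2 * (xt \<bullet> ((?CA\<^sup>T * ?CQ * ?CB * ?S \<omega>) *\<^sub>v (Th *\<^sub>v ?F \<omega>)))
     + 2 * (eta \<bullet> (((?G \<omega>)\<^sup>T * ?K) *\<^sub>v ?X \<omega>)) + 2 * ((Th *\<^sub>v ?F \<omega>) \<bullet> (((?S \<omega>)\<^sup>T * ?K) *\<^sub>v ?X \<omega>))
     + eta \<bullet> (((?G \<omega>)\<^sup>T * ?MM * ?G \<omega>) *\<^sub>v eta) + eta \<bullet> (((?G \<omega>)\<^sup>T * ?MM * ?S \<omega>) *\<^sub>v (Th *\<^sub>v ?F \<omega>))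
     + (Th *\<^sub>v ?F \<omega>) \<bullet> (((?S \<omega>)\<^sup>T * ?MM * ?G \<omega>) *\<^sub>v eta) + (Th *\<^sub>v ?F \<omega>) \<bullet> (((?S \<omega>)\<^sup>T * ?MM * ?S \<omega>) *\<^sub>v (Th *\<^sub>v ?F \<omega>))"
    for \<omega>
    unfolding xtraj_def uapplied_def Mmat_def
    by (rule pointwise[OF CA CB CD CQ CQs CR Gc Sc xt eta Th Fc Xc])
  note g2 = G2[OF nm_const[OF P2] wv_X wv_X]
  have i2: "integral\<^sup>L M (\<lambda>\<omega>. ?X \<omega> \<bullet> ((?CD\<^sup>T * ?CQ * ?CD) *\<^sub>v ?X \<omega>)) = mtrace ((?CD\<^sup>T * ?CQ * ?CD) * SigW M d N W t)"
    using g2(2) by (simp add: mexp_const[OF P2] SigW_def)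
  note g3 = G2[OF nm_const[OF P3] wv_const[OF xt] wv_X]
  have i3: "integral\<^sup>L M (\<lambda>\<omega>. xt \<bullet> ((?CA\<^sup>T * ?CQ * ?CD) *\<^sub>v ?X \<omega>)) = 0"
    using g3(2) by (simp add: mexp_const[OF P3] mexp_outer_zero[OF wv_X mz_X xt] mtrace_zero[OF P3])
  have n4: "nm d ?q (\<lambda>\<omega>. (?CA\<^sup>T * ?CQ * ?CB) * ?G \<omega>)" by (rule nm_mult[OF nm_const[OF C4] nm_G])
  note g4 = G2[OF n4 wv_const[OF xt] wv_const[OF eta]]
  have i4: "integral\<^sup>L M (\<lambda>\<omega>. xt \<bullet> ((?CA\<^sup>T * ?CQ * ?CB * ?G \<omega>) *\<^sub>v eta)) = xt \<bullet> ((?CA\<^sup>T * ?CQ * ?CB * muG M m N \<kappa> nu t) *\<^sub>v eta)"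
  proof -
    have oc: "outer eta xt \<in> carrier_mat ?q d" using eta xt by (simp add: outer_def)
    have "mtrace ((?CA\<^sup>T * ?CQ * ?CB * muG M m N \<kappa> nu t) * outer eta xt) = xt \<bullet> ((?CA\<^sup>T * ?CQ * ?CB * muG M m N \<kappa> nu t) *\<^sub>v eta)"
      by (rule mtrace_outer) (use C4 eta xt in \<open>auto simp: muG_def\<close>)
    then show ?thesis using g4(2) by (simp add: mexp_left[OF C4 nm_G] mexp_const[OF oc] muG_def)
  qed
  have n5: "nm d ?q (\<lambda>\<omega>. (?CA\<^sup>T * ?CQ * ?CB) * ?S \<omega>)" by (rule nm_mult[OF nm_const[OF C4] nm_S])
  note g5 = G2[OF n5 wv_const[OF xt] wvf]
  have i5: "integral\<^sup>L M (\<lambda>\<omega>. xt \<bullet> ((?CA\<^sup>T * ?CQ * ?CB * ?S \<omega>) *\<^sub>v (Th *\<^sub>v ?F \<omega>))) = 0"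
    using g5(2) by (simp add: mexp_outer_zero[OF wvf mzf xt] mtrace_zero[OF mexp_carrier])
  have n6: "nm ?q ?r (\<lambda>\<omega>. (?G \<omega>)\<^sup>T * ?K)" by (rule nm_mult[OF nm_transpose[OF nm_G] nm_const[OF K]])
  note g6 = G2[OF n6 wv_const[OF eta] wv_X]
  have i6: "integral\<^sup>L M (\<lambda>\<omega>. eta \<bullet> (((?G \<omega>)\<^sup>T * ?K) *\<^sub>v ?X \<omega>)) = 0"
    using g6(2) by (simp add: mexp_outer_zero[OF wv_X mz_X eta] mtrace_zero[OF mexp_carrier])
  have n7: "nm ?q ?r (\<lambda>\<omega>. (?S \<omega>)\<^sup>T * ?K)" by (rule nm_mult[OF nm_transpose[OF nm_S] nm_const[OF K]])
  note g7 = G2[OF n7 wvf wv_X]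
  have i7: "integral\<^sup>L M (\<lambda>\<omega>. (Th *\<^sub>v ?F \<omega>) \<bullet> (((?S \<omega>)\<^sup>T * ?K) *\<^sub>v ?X \<omega>))
      = mtrace ((muS M m N \<kappa> nu t)\<^sup>T * ?K * (SigPhi' M d N phi W t * Th\<^sup>T))"
  proof -
    have e1: "mexp M ?q ?r (\<lambda>\<omega>. (?S \<omega>)\<^sup>T * ?K) = (muS M m N \<kappa> nu t)\<^sup>T * ?K"
      using mexp_right[OF K nm_transpose[OF nm_S]] mexp_transpose[OF nm_S] by (simp add: muS_def)
    have "mexp M ?r ?q (\<lambda>\<omega>. outer (?X \<omega>) (Th *\<^sub>v ?F \<omega>)) = mexp M ?r ?q (\<lambda>\<omega>. outer (1\<^sub>m ?r *\<^sub>v ?X \<omega>) (Th *\<^sub>v ?F \<omega>))"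
      by (rule mexp_cong) (simp add: Xc)
    also have "\<dots> = 1\<^sub>m ?r * mexp M ?r ?s (\<lambda>\<omega>. outer (?X \<omega>) (?F \<omega>)) * Th\<^sup>T"
      by (rule mexp_outer[OF one_carrier_mat Th wv_X wv_F])
    also have "\<dots> = SigPhi' M d N phi W t * Th\<^sup>T" by (simp add: SigPhi'_def)
    finally show ?thesis using g7(2) e1 by simp
  qed
  have n8: "nm ?q ?q (\<lambda>\<omega>. (?G \<omega>)\<^sup>T * ?MM * ?G \<omega>)"
    by (rule nm_mult[OF nm_mult[OF nm_transpose[OF nm_G] nm_const[OF MM]] nm_G])
  note g8 = G2[OF n8 wv_const[OF eta] wv_const[OF eta]]
  have i8: "integral\<^sup>L M (\<lambda>\<omega>. eta \<bullet> (((?G \<omega>)\<^sup>T * ?MM * ?G \<omega>) *\<^sub>v eta)) = qform (SigG M d m N \<kappa> A B Q Qf R nu t) eta"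
  proof -
    have oc: "outer eta eta \<in> carrier_mat ?q ?q" using eta by (simp add: outer_def)
    have "mtrace (SigG M d m N \<kappa> A B Q Qf R nu t * outer eta eta) = qform (SigG M d m N \<kappa> A B Q Qf R nu t) eta"
      unfolding qform_def by (rule mtrace_outer) (use eta in \<open>auto simp: SigG_def\<close>)
    then show ?thesis using g8(2) by (simp add: mexp_const[OF oc] SigG_def)
  qed
  have n9: "nm ?q ?q (\<lambda>\<omega>. (?G \<omega>)\<^sup>T * ?MM * ?S \<omega>)"
    by (rule nm_mult[OF nm_mult[OF nm_transpose[OF nm_G] nm_const[OF MM]] nm_S])
  note g9 = G2[OF n9 wv_const[OF eta] wvf]
  have i9: "integral\<^sup>L M (\<lambda>\<omega>. eta \<bullet> (((?G \<omega>)\<^sup>T * ?MM * ?S \<omega>) *\<^sub>v (Th *\<^sub>v ?F \<omega>))) = 0"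
    using g9(2) by (simp add: mexp_outer_zero[OF wvf mzf eta] mtrace_zero[OF mexp_carrier])
  have n10: "nm ?q ?q (\<lambda>\<omega>. (?S \<omega>)\<^sup>T * ?MM * ?G \<omega>)"
    by (rule nm_mult[OF nm_mult[OF nm_transpose[OF nm_S] nm_const[OF MM]] nm_G])
  note g10 = G2[OF n10 wvf wv_const[OF eta]]
  have i10: "integral\<^sup>L M (\<lambda>\<omega>. (Th *\<^sub>v ?F \<omega>) \<bullet> (((?S \<omega>)\<^sup>T * ?MM * ?G \<omega>) *\<^sub>v eta)) = 0"
    using g10(2) by (simp add: mexp_outer_zero2[OF wvf mzf eta] mtrace_zero[OF mexp_carrier])
  have n11: "nm ?q ?q (\<lambda>\<omega>. (?S \<omega>)\<^sup>T * ?MM * ?S \<omega>)"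
    by (rule nm_mult[OF nm_mult[OF nm_transpose[OF nm_S] nm_const[OF MM]] nm_S])
  note g11 = G2[OF n11 wvf wvf]
  have i11: "integral\<^sup>L M (\<lambda>\<omega>. (Th *\<^sub>v ?F \<omega>) \<bullet> (((?S \<omega>)\<^sup>T * ?MM * ?S \<omega>) *\<^sub>v (Th *\<^sub>v ?F \<omega>)))
      = mtrace (SigS M d m N \<kappa> A B Q Qf R nu t * (Th * SigPhi M d N phi W t * Th\<^sup>T))"
  proof -
    have "mexp M ?q ?q (\<lambda>\<omega>. outer (Th *\<^sub>v ?F \<omega>) (Th *\<^sub>v ?F \<omega>)) = Th * SigPhi M d N phi W t * Th\<^sup>T"
      unfolding SigPhi_def by (rule mexp_outer[OF Th Th wv_F wv_F])
    then show ?thesis using g11(2) by (simp add: SigS_def)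
  qed
  show "integrable M (\<lambda>\<omega>. qform ?CQ (xtraj d m N \<kappa> A B phi W nu t xt eta Th \<omega>)
                    + qform ?CR (uapplied d m N \<kappa> phi W nu t eta Th \<omega>))"
    unfolding pw using g2(1) g3(1) g4(1) g5(1) g6(1) g7(1) g8(1) g9(1) g10(1) g11(1) by simp
  have "Jcost M d m N \<kappa> A B Q Qf R phi W nu t xt eta Th =
     xt \<bullet> ((?CA\<^sup>T * ?CQ * ?CA) *\<^sub>v xt) + mtrace ((?CD\<^sup>T * ?CQ * ?CD) * SigW M d N W t)
     + 2 * 0 + 2 * (xt \<bullet> ((?CA\<^sup>T * ?CQ * ?CB * muG M m N \<kappa> nu t) *\<^sub>v eta)) + 2 * 0 + 2 * 0
     + 2 * mtrace ((muS M m N \<kappa> nu t)\<^sup>T * ?K * (SigPhi' M d N phi W t * Th\<^sup>T))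
     + qform (SigG M d m N \<kappa> A B Q Qf R nu t) eta + 0 + 0
     + mtrace (SigS M d m N \<kappa> A B Q Qf R nu t * (Th * SigPhi M d N phi W t * Th\<^sup>T))"
    unfolding Jcost_def pw
    using g2(1) g3(1) g4(1) g5(1) g6(1) g7(1) g8(1) g9(1) g10(1) g11(1) i2 i3 i4 i5 i6 i7 i8 i9 i10 i11
    by (simp add: prob_space)
  also have "\<dots> = Jtract M d m N \<kappa> A B Q Qf R phi W nu t xt eta Th"
  proof -
    let ?muS = "muS M m N \<kappa> nu t" and ?SP' = "SigPhi' M d N phi W t" and ?SS = "SigS M d m N \<kappa> A B Q Qf R nu t"
      and ?SP = "SigPhi M d N phi W t"
    have muS: "?muS\<^sup>T \<in> carrier_mat ?q ?q" by (simp add: muS_def)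
    have SP': "?SP' \<in> carrier_mat ?r ?s" by (simp add: SigPhi'_def)
    have SS: "?SS \<in> carrier_mat ?q ?q" by (simp add: SigS_def)
    have SP: "?SP \<in> carrier_mat ?s ?s" by (simp add: SigPhi_def)
    have ThT: "Th\<^sup>T \<in> carrier_mat ?s ?q" using Th by simp
    have CBT: "?CB\<^sup>T \<in> carrier_mat ?q ?pd" using CB by simp
    have muSK: "?muS\<^sup>T * ?K \<in> carrier_mat ?q ?r" using muS K by simp
    have "mtrace (?muS\<^sup>T * ?K * (?SP' * Th\<^sup>T)) = mtrace (Th\<^sup>T * (?muS\<^sup>T * ?K) * ?SP')"
      by (rule trace_cyc3[OF muSK SP' ThT])
    also have "Th\<^sup>T * (?muS\<^sup>T * ?K) = Th\<^sup>T * ?muS\<^sup>T * ?CB\<^sup>T * ?CQ * ?CD"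
    proof -
      have a1: "?CB\<^sup>T * ?CQ \<in> carrier_mat ?q ?pd" using CB CQ by simp
      have a2: "Th\<^sup>T * ?muS\<^sup>T \<in> carrier_mat ?s ?q" using ThT muS by simp
      have "Th\<^sup>T * (?muS\<^sup>T * ?K) = (Th\<^sup>T * ?muS\<^sup>T) * ?K"
        using assoc_mult_mat[OF ThT muS K] by simp
      also have "\<dots> = ((Th\<^sup>T * ?muS\<^sup>T) * (?CB\<^sup>T * ?CQ)) * ?CD"
        using assoc_mult_mat[OF a2 a1 CD] by simp
      also have "(Th\<^sup>T * ?muS\<^sup>T) * (?CB\<^sup>T * ?CQ) = Th\<^sup>T * ?muS\<^sup>T * ?CB\<^sup>T * ?CQ"
        using assoc_mult_mat[OF a2 CBT CQ] by simp
      finally show ?thesis .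
    qed
    finally have I1: "mtrace (?muS\<^sup>T * ?K * (?SP' * Th\<^sup>T)) = mtrace (Th\<^sup>T * ?muS\<^sup>T * ?CB\<^sup>T * ?CQ * ?CD * ?SP')" .
    have ThSP: "Th * ?SP \<in> carrier_mat ?q ?s" using Th SP by simp
    have "mtrace (?SS * (Th * ?SP * Th\<^sup>T)) = mtrace (Th\<^sup>T * ?SS * (Th * ?SP))"
      by (rule trace_cyc3[OF SS ThSP ThT])
    also have "Th\<^sup>T * ?SS * (Th * ?SP) = Th\<^sup>T * ?SS * Th * ?SP"
    proof -
      have "Th\<^sup>T * ?SS \<in> carrier_mat ?s ?q" using ThT SS by simp
      from assoc_mult_mat[OF this Th SP] show ?thesis by simp
    qed
    finally have I2: "mtrace (?SS * (Th * ?SP * Th\<^sup>T)) = mtrace (Th\<^sup>T * ?SS * Th * ?SP)" .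
    show ?thesis unfolding Jtract_def ct_def qform_def[of _ xt] using I1 I2 by simp
  qed
  finally show "Jcost M d m N \<kappa> A B Q Qf R phi W nu t xt eta Th = Jtract M d m N \<kappa> A B Q Qf R phi W nu t xt eta Th" .
qed

end


lemma lin_mv:
  fixes C :: "real mat"
  assumes "C \<in> carrier_mat n k" "x \<in> carrier_vec k" "y \<in> carrier_vec k"
  shows "C *\<^sub>v (a \<cdot>\<^sub>v x + b \<cdot>\<^sub>v y) = a \<cdot>\<^sub>v (C *\<^sub>v x) + b \<cdot>\<^sub>v (C *\<^sub>v y)"
proof (rule eq_vecI)
  fix i assume "i < dim_vec (a \<cdot>\<^sub>v (C *\<^sub>v x) + b \<cdot>\<^sub>v (C *\<^sub>v y))"
  then have i: "i < n" using assms by simp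
  have c: "a \<cdot>\<^sub>v x + b \<cdot>\<^sub>v y \<in> carrier_vec k" using assms by simp
  show "(C *\<^sub>v (a \<cdot>\<^sub>v x + b \<cdot>\<^sub>v y)) $ i = (a \<cdot>\<^sub>v (C *\<^sub>v x) + b \<cdot>\<^sub>v (C *\<^sub>v y)) $ i"
    using i assms mult_vec_entry[OF assms(1) c i] mult_vec_entry[OF assms(1) assms(2) i] mult_vec_entry[OF assms(1) assms(3) i]
    by (simp add: algebra_simps sum.distrib sum_distrib_left)
qed (use assms in simp)

lemma lin_mm:
  fixes C1 C2 :: "real mat"
  assumes "C1 \<in> carrier_mat n k" "C2 \<in> carrier_mat n k" "v \<in> carrier_vec k"
  shows "(a \<cdot>\<^sub>m C1 + b \<cdot>\<^sub>m C2) *\<^sub>v v = a \<cdot>\<^sub>v (C1 *\<^sub>v v) + b \<cdot>\<^sub>v (C2 *\<^sub>v v)"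
proof (rule eq_vecI)
  fix i assume "i < dim_vec (a \<cdot>\<^sub>v (C1 *\<^sub>v v) + b \<cdot>\<^sub>v (C2 *\<^sub>v v))"
  then have i: "i < n" using assms by simp
  have c: "a \<cdot>\<^sub>m C1 + b \<cdot>\<^sub>m C2 \<in> carrier_mat n k" using assms by simp
  show "((a \<cdot>\<^sub>m C1 + b \<cdot>\<^sub>m C2) *\<^sub>v v) $ i = (a \<cdot>\<^sub>v (C1 *\<^sub>v v) + b \<cdot>\<^sub>v (C2 *\<^sub>v v)) $ i"
    using i assms mult_vec_entry[OF c assms(3) i] mult_vec_entry[OF assms(1) assms(3) i] mult_vec_entry[OF assms(2) assms(3) i]
    by (simp add: algebra_simps sum.distrib sum_distrib_left)
qed (use assms in simp)

lemma combo_vec: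
  fixes x1 x2 y1 y2 :: "real vec"
  assumes "x1 \<in> carrier_vec n" "x2 \<in> carrier_vec n" "y1 \<in> carrier_vec n" "y2 \<in> carrier_vec n"
  shows "(a \<cdot>\<^sub>v x1 + b \<cdot>\<^sub>v x2) + (a \<cdot>\<^sub>v y1 + b \<cdot>\<^sub>v y2) = a \<cdot>\<^sub>v (x1 + y1) + b \<cdot>\<^sub>v (x2 + y2)"
  by (rule eq_vecI) (use assms in \<open>auto simp: algebra_simps\<close>)

lemma combo_aff:
  fixes c x1 x2 e :: "real vec"
  assumes "c \<in> carrier_vec n" "x1 \<in> carrier_vec n" "x2 \<in> carrier_vec n" "e \<in> carrier_vec n"
  shows "c + (a \<cdot>\<^sub>v x1 + (1 - a) \<cdot>\<^sub>v x2) + e = a \<cdot>\<^sub>v (c + x1 + e) + (1 - a) \<cdot>\<^sub>v (c + x2 + e)"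
  by (rule eq_vecI) (use assms in \<open>auto simp: algebra_simps\<close>)

context tp3 begin

lemma uapplied_combo:
  assumes e1: "e1 \<in> carrier_vec (N*m)" and e2: "e2 \<in> carrier_vec (N*m)"
    and T1: "T1 \<in> carrier_mat (N*m) ((N-1)*d)" and T2: "T2 \<in> carrier_mat (N*m) ((N-1)*d)"
  shows "uapplied d m N \<kappa> phi W nu t (a \<cdot>\<^sub>v e1 + (1 - a) \<cdot>\<^sub>v e2) (a \<cdot>\<^sub>m T1 + (1 - a) \<cdot>\<^sub>m T2) \<omega>
     = a \<cdot>\<^sub>v uapplied d m N \<kappa> phi W nu t e1 T1 \<omega> + (1 - a) \<cdot>\<^sub>v uapplied d m N \<kappa> phi W nu t e2 T2 \<omega>"
proof -
  let ?G = "Gmat m N \<kappa> nu t \<omega>" and ?S = "Smat m N \<kappa> nu t \<omega>" and ?F = "phistack d N phi W t \<omega>"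
  have G: "?G \<in> carrier_mat (N*m) (N*m)" and S: "?S \<in> carrier_mat (N*m) (N*m)" and F: "?F \<in> carrier_vec ((N-1)*d)"
    by (simp_all add: Gmat_def Smat_def phistack_def)
  have "uapplied d m N \<kappa> phi W nu t (a \<cdot>\<^sub>v e1 + (1 - a) \<cdot>\<^sub>v e2) (a \<cdot>\<^sub>m T1 + (1 - a) \<cdot>\<^sub>m T2) \<omega>
     = (a \<cdot>\<^sub>v (?G *\<^sub>v e1) + (1 - a) \<cdot>\<^sub>v (?G *\<^sub>v e2)) + (a \<cdot>\<^sub>v (?S *\<^sub>v (T1 *\<^sub>v ?F)) + (1 - a) \<cdot>\<^sub>v (?S *\<^sub>v (T2 *\<^sub>v ?F)))"
    unfolding uapplied_def lin_mv[OF G e1 e2] lin_mm[OF T1 T2 F]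
    using lin_mv[OF S, of "T1 *\<^sub>v ?F" "T2 *\<^sub>v ?F"] T1 T2 F by simp
  also have "\<dots> = a \<cdot>\<^sub>v uapplied d m N \<kappa> phi W nu t e1 T1 \<omega> + (1 - a) \<cdot>\<^sub>v uapplied d m N \<kappa> phi W nu t e2 T2 \<omega>"
    unfolding uapplied_def by (rule combo_vec[of _ "N*m"]) (use G S e1 e2 T1 T2 F in auto)
  finally show ?thesis .
qed


lemma uapplied_carrier:
  assumes "e \<in> carrier_vec (N*m)" "T \<in> carrier_mat (N*m) ((N-1)*d)"
  shows "uapplied d m N \<kappa> phi W nu t e T \<omega> \<in> carrier_vec (N*m)"
proof -
  have G: "Gmat m N \<kappa> nu t \<omega> \<in> carrier_mat (N*m) (N*m)" and S: "Smat m N \<kappa> nu t \<omega> \<in> carrier_mat (N*m) (N*m)"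
    and F: "phistack d N phi W t \<omega> \<in> carrier_vec ((N-1)*d)"
    by (simp_all add: Gmat_def Smat_def phistack_def)
  show ?thesis unfolding uapplied_def
    by (intro add_carrier_vec mult_mat_vec_carrier[OF G] mult_mat_vec_carrier[OF S] mult_mat_vec_carrier[OF assms(2) F] assms(1))
qed

lemma xtraj_combo:
  assumes e1: "e1 \<in> carrier_vec (N*m)" and e2: "e2 \<in> carrier_vec (N*m)"
    and T1: "T1 \<in> carrier_mat (N*m) ((N-1)*d)" and T2: "T2 \<in> carrier_mat (N*m) ((N-1)*d)"
    and xt: "xt \<in> carrier_vec d"
  shows "xtraj d m N \<kappa> A B phi W nu t xt (a \<cdot>\<^sub>v e1 + (1 - a) \<cdot>\<^sub>v e2) (a \<cdot>\<^sub>m T1 + (1 - a) \<cdot>\<^sub>m T2) \<omega>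
     = a \<cdot>\<^sub>v xtraj d m N \<kappa> A B phi W nu t xt e1 T1 \<omega> + (1 - a) \<cdot>\<^sub>v xtraj d m N \<kappa> A B phi W nu t xt e2 T2 \<omega>"
proof -
  have u: "uapplied d m N \<kappa> phi W nu t e T \<omega> \<in> carrier_vec (N*m)"
    if "e \<in> carrier_vec (N*m)" "T \<in> carrier_mat (N*m) ((N-1)*d)" for e T
    using that by (rule uapplied_carrier)
  have CB: "calB N d m A B \<in> carrier_mat ((N+1)*d) (N*m)" by (rule calB_carrier)
  have CA: "calA N d A *\<^sub>v xt \<in> carrier_vec ((N+1)*d)" by (rule mult_mat_vec_carrier[OF calA_carrier xt])
  have CD: "calD N d A *\<^sub>v wstack d N W t \<omega> \<in> carrier_vec ((N+1)*d)"
    by (rule mult_mat_vec_carrier[OF calD_carrier]) (unfold wstack_def, rule vec_carrier)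
  have CBu: "calB N d m A B *\<^sub>v uapplied d m N \<kappa> phi W nu t e T \<omega> \<in> carrier_vec ((N+1)*d)"
    if "e \<in> carrier_vec (N*m)" "T \<in> carrier_mat (N*m) ((N-1)*d)" for e T
    using u[OF that] CB by simp
  show ?thesis
    unfolding xtraj_def uapplied_combo[OF e1 e2 T1 T2] lin_mv[OF CB u[OF e1 T1] u[OF e2 T2]]
    by (rule combo_aff[OF CA CBu[OF e1 T1] CBu[OF e2 T2] CD])
qed

lemma J_convex:
  assumes Q: "sym_psd d Q" and Qf: "sym_psd d Qf" and R: "sym_pd m R" and xt: "xt \<in> carrier_vec d"
    and z1: "decision d m N e1 T1" and z2: "decision d m N e2 T2" and a: "0 \<le> a" "a \<le> 1"
  shows "Jcost M d m N \<kappa> A B Q Qf R phi W nu t xt (a \<cdot>\<^sub>v e1 + (1 - a) \<cdot>\<^sub>v e2) (a \<cdot>\<^sub>m T1 + (1 - a) \<cdot>\<^sub>m T2)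
     \<le> a * Jcost M d m N \<kappa> A B Q Qf R phi W nu t xt e1 T1 + (1 - a) * Jcost M d m N \<kappa> A B Q Qf R phi W nu t xt e2 T2"
proof -
  have e1: "e1 \<in> carrier_vec (N*m)" and T1: "T1 \<in> carrier_mat (N*m) ((N-1)*d)"
    and e2: "e2 \<in> carrier_vec (N*m)" and T2: "T2 \<in> carrier_mat (N*m) ((N-1)*d)"
    using z1 z2 unfolding decision_def theta_struct_def by auto
  have ec: "a \<cdot>\<^sub>v e1 + (1 - a) \<cdot>\<^sub>v e2 \<in> carrier_vec (N*m)" using e1 e2 by simp
  have Tc: "a \<cdot>\<^sub>m T1 + (1 - a) \<cdot>\<^sub>m T2 \<in> carrier_mat (N*m) ((N-1)*d)" using T1 T2 by simp
  define J where "J e T \<omega> = qform (calQ N d Q Qf) (xtraj d m N \<kappa> A B phi W nu t xt e T \<omega>)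
                    + qform (calR N m R) (uapplied d m N \<kappa> phi W nu t e T \<omega>)" for e T \<omega>
  have iJ: "integrable M (J e T)" if "e \<in> carrier_vec (N*m)" "T \<in> carrier_mat (N*m) ((N-1)*d)" for e T
    unfolding J_def by (rule main_eq(1)[OF Q Qf xt that])
  have u: "uapplied d m N \<kappa> phi W nu t e T \<omega> \<in> carrier_vec (N*m)"
    if "e \<in> carrier_vec (N*m)" "T \<in> carrier_mat (N*m) ((N-1)*d)" for e T \<omega>
    using that by (rule uapplied_carrier)
  have x: "xtraj d m N \<kappa> A B phi W nu t xt e T \<omega> \<in> carrier_vec ((N+1)*d)"
    if "e \<in> carrier_vec (N*m)" "T \<in> carrier_mat (N*m) ((N-1)*d)" for e T \<omega>
  proof -
    have "calB N d m A B *\<^sub>v uapplied d m N \<kappa> phi W nu t e T \<omega> \<in> carrier_vec ((N+1)*d)"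
      using u[OF that] calB_carrier by (rule mult_mat_vec_carrier[rotated])
    moreover have W: "wstack d N W t \<omega> \<in> carrier_vec (N*d)" unfolding wstack_def by (rule vec_carrier)
    ultimately show ?thesis unfolding xtraj_def
      by (rule add_carrier_vec[OF add_carrier_vec[OF mult_mat_vec_carrier[OF calA_carrier xt]] mult_mat_vec_carrier[OF calD_carrier]])
  qed
  have pt: "J (a \<cdot>\<^sub>v e1 + (1 - a) \<cdot>\<^sub>v e2) (a \<cdot>\<^sub>m T1 + (1 - a) \<cdot>\<^sub>m T2) \<omega> \<le> a * J e1 T1 \<omega> + (1 - a) * J e2 T2 \<omega>" for \<omega>
  proof -
    have "qform (calQ N d Q Qf) (xtraj d m N \<kappa> A B phi W nu t xt (a \<cdot>\<^sub>v e1 + (1 - a) \<cdot>\<^sub>v e2) (a \<cdot>\<^sub>m T1 + (1 - a) \<cdot>\<^sub>m T2) \<omega>)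
       \<le> a * qform (calQ N d Q Qf) (xtraj d m N \<kappa> A B phi W nu t xt e1 T1 \<omega>) + (1 - a) * qform (calQ N d Q Qf) (xtraj d m N \<kappa> A B phi W nu t xt e2 T2 \<omega>)"
      unfolding xtraj_combo[OF e1 e2 T1 T2 xt]
      by (rule qform_convex[OF calQ_carrier calQ_psd[OF Q Qf] x[OF e1 T1] x[OF e2 T2] a])
    moreover have "qform (calR N m R) (uapplied d m N \<kappa> phi W nu t (a \<cdot>\<^sub>v e1 + (1 - a) \<cdot>\<^sub>v e2) (a \<cdot>\<^sub>m T1 + (1 - a) \<cdot>\<^sub>m T2) \<omega>)
       \<le> a * qform (calR N m R) (uapplied d m N \<kappa> phi W nu t e1 T1 \<omega>) + (1 - a) * qform (calR N m R) (uapplied d m N \<kappa> phi W nu t e2 T2 \<omega>)"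
      unfolding uapplied_combo[OF e1 e2 T1 T2]
      by (rule qform_convex[OF calR_carrier calR_psd[OF R] u[OF e1 T1] u[OF e2 T2] a])
    ultimately show ?thesis unfolding J_def by (simp add: algebra_simps)
  qed
  have "integral\<^sup>L M (J (a \<cdot>\<^sub>v e1 + (1 - a) \<cdot>\<^sub>v e2) (a \<cdot>\<^sub>m T1 + (1 - a) \<cdot>\<^sub>m T2))
      \<le> integral\<^sup>L M (\<lambda>\<omega>. a * J e1 T1 \<omega> + (1 - a) * J e2 T2 \<omega>)"
    by (rule integral_mono) (use iJ[OF ec Tc] iJ[OF e1 T1] iJ[OF e2 T2] pt in auto)
  also have "\<dots> = a * integral\<^sup>L M (J e1 T1) + (1 - a) * integral\<^sup>L M (J e2 T2)"
    using iJ[OF e1 T1] iJ[OF e2 T2] by simp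
  finally show ?thesis unfolding Jcost_def J_def[abs_def] .
qed


lemma F_bound: assumes "k < (N - 1) * d" shows "\<bar>phistack d N phi W t \<omega> $ k\<bar> \<le> phimax"
proof -
  have dd: "k mod d < d" using assms by (cases "d = 0") auto
  have b: "1 \<le> k div d + 1" "k div d + 1 \<le> N - 1"
    using assms by (auto simp: less_mult_imp_div_less Suc_leI)
  show ?thesis using phi_bound[OF b _ dd, of "wvec d W (t + k div d) \<omega>"] assms
    by (simp add: phistack_def wvec_def)
qed

lemma ucomp_combo:
  assumes e1: "e1 \<in> carrier_vec (N*m)" and e2: "e2 \<in> carrier_vec (N*m)"
    and T1: "T1 \<in> carrier_mat (N*m) ((N-1)*d)" and T2: "T2 \<in> carrier_mat (N*m) ((N-1)*d)"
  shows "ucomp d N phi W t (a \<cdot>\<^sub>v e1 + (1 - a) \<cdot>\<^sub>v e2) (a \<cdot>\<^sub>m T1 + (1 - a) \<cdot>\<^sub>m T2) \<omega>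
     = a \<cdot>\<^sub>v ucomp d N phi W t e1 T1 \<omega> + (1 - a) \<cdot>\<^sub>v ucomp d N phi W t e2 T2 \<omega>"
proof -
  have F: "phistack d N phi W t \<omega> \<in> carrier_vec ((N-1)*d)" by (simp add: phistack_def)
  show ?thesis unfolding ucomp_def lin_mm[OF T1 T2 F]
    by (rule combo_vec[of _ "N*m"]) (use e1 e2 T1 T2 F in auto)
qed

lemma feasible_zero: assumes "0 < Umax"
  shows "feasible M d m N phi W t Umax (0\<^sub>v (N*m)) (0\<^sub>m (N*m) ((N-1)*d))"
proof -
  have F: "phistack d N phi W t \<omega> \<in> carrier_vec ((N-1)*d)" for \<omega> by (simp add: phistack_def)
  have "ucomp d N phi W t (0\<^sub>v (N*m)) (0\<^sub>m (N*m) ((N-1)*d)) \<omega> $ i = 0" if "i < N*m" for \<omega> i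
    using that F[of \<omega>] by (simp add: ucomp_def)
  then show ?thesis using assms
    unfolding feasible_def decision_def theta_struct_def by (auto intro!: AE_I2)
qed

lemma feasible_convex:
  assumes z1: "feasible M d m N phi W t Umax e1 T1" and z2: "feasible M d m N phi W t Umax e2 T2"
    and a: "0 \<le> a" "a \<le> 1"
  shows "feasible M d m N phi W t Umax (a \<cdot>\<^sub>v e1 + (1 - a) \<cdot>\<^sub>v e2) (a \<cdot>\<^sub>m T1 + (1 - a) \<cdot>\<^sub>m T2)"
proof -
  have e1: "e1 \<in> carrier_vec (N*m)" and T1: "T1 \<in> carrier_mat (N*m) ((N-1)*d)"
    and e2: "e2 \<in> carrier_vec (N*m)" and T2: "T2 \<in> carrier_mat (N*m) ((N-1)*d)"
    using z1 z2 unfolding feasible_def decision_def theta_struct_def by auto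
  have dec: "decision d m N (a \<cdot>\<^sub>v e1 + (1 - a) \<cdot>\<^sub>v e2) (a \<cdot>\<^sub>m T1 + (1 - a) \<cdot>\<^sub>m T2)"
    using z1 z2 e1 e2 T1 T2 unfolding feasible_def decision_def theta_struct_def by auto
  have F: "phistack d N phi W t \<omega> \<in> carrier_vec ((N-1)*d)" for \<omega> by (simp add: phistack_def)
  have u: "ucomp d N phi W t e T \<omega> \<in> carrier_vec (N*m)" if "e \<in> carrier_vec (N*m)" "T \<in> carrier_mat (N*m) ((N-1)*d)" for e T \<omega>
    unfolding ucomp_def using that F[of \<omega>] by simp
  have "AE \<omega> in M. \<forall>i < N * m. \<bar>ucomp d N phi W t (a \<cdot>\<^sub>v e1 + (1 - a) \<cdot>\<^sub>v e2) (a \<cdot>\<^sub>m T1 + (1 - a) \<cdot>\<^sub>m T2) \<omega> $ i\<bar> \<le> Umax"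
    using z1 z2 unfolding feasible_def
  proof -
    assume "decision d m N e1 T1 \<and> (AE \<omega> in M. \<forall>i<N * m. \<bar>ucomp d N phi W t e1 T1 \<omega> $ i\<bar> \<le> Umax)"
      "decision d m N e2 T2 \<and> (AE \<omega> in M. \<forall>i<N * m. \<bar>ucomp d N phi W t e2 T2 \<omega> $ i\<bar> \<le> Umax)"
    then have A1: "AE \<omega> in M. \<forall>i<N * m. \<bar>ucomp d N phi W t e1 T1 \<omega> $ i\<bar> \<le> Umax"
      and A2: "AE \<omega> in M. \<forall>i<N * m. \<bar>ucomp d N phi W t e2 T2 \<omega> $ i\<bar> \<le> Umax" by auto
    from A1 A2 show ?thesis
  proof eventually_elim
    case (elim \<omega>)
    show ?case
    proof (intro allI impI)
      fix i assume i: "i < N * m"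
      have "ucomp d N phi W t (a \<cdot>\<^sub>v e1 + (1 - a) \<cdot>\<^sub>v e2) (a \<cdot>\<^sub>m T1 + (1 - a) \<cdot>\<^sub>m T2) \<omega> $ i
          = a * ucomp d N phi W t e1 T1 \<omega> $ i + (1 - a) * ucomp d N phi W t e2 T2 \<omega> $ i"
        unfolding ucomp_combo[OF e1 e2 T1 T2] using i u[OF e1 T1, of \<omega>] u[OF e2 T2, of \<omega>] by simp
      also have "\<bar>\<dots>\<bar> \<le> a * \<bar>ucomp d N phi W t e1 T1 \<omega> $ i\<bar> + (1 - a) * \<bar>ucomp d N phi W t e2 T2 \<omega> $ i\<bar>"
        using a by (auto intro!: order_trans[OF abs_triangle_ineq] simp: abs_mult)
      also have "\<dots> \<le> a * Umax + (1 - a) * Umax"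
        using elim i a by (intro add_mono mult_left_mono) auto
      finally show "\<bar>ucomp d N phi W t (a \<cdot>\<^sub>v e1 + (1 - a) \<cdot>\<^sub>v e2) (a \<cdot>\<^sub>m T1 + (1 - a) \<cdot>\<^sub>m T2) \<omega> $ i\<bar> \<le> Umax"
        by (simp add: algebra_simps)
    qed
  qed
  qed
  then show ?thesis using dec unfolding feasible_def by simp
qed

lemma tight_feasible:
  assumes dec: "decision d m N e T" and tt: "tightened d m N phimax Umax e T"
  shows "feasible M d m N phi W t Umax e T"
proof -
  have e: "e \<in> carrier_vec (N*m)" and T: "T \<in> carrier_mat (N*m) ((N-1)*d)"
    using dec unfolding decision_def theta_struct_def by auto
  have F: "phistack d N phi W t \<omega> \<in> carrier_vec ((N-1)*d)" for \<omega> by (simp add: phistack_def)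
  have "\<bar>ucomp d N phi W t e T \<omega> $ i\<bar> \<le> Umax" if i: "i < N*m" for \<omega> i
  proof -
    have "ucomp d N phi W t e T \<omega> $ i = e $ i + (\<Sum>k<(N-1)*d. T $$ (i,k) * phistack d N phi W t \<omega> $ k)"
      unfolding ucomp_def using e T F[of \<omega>] i mult_vec_entry[OF T F i] by simp
    also have "\<bar>\<dots>\<bar> \<le> \<bar>e $ i\<bar> + (\<Sum>k<(N-1)*d. \<bar>T $$ (i,k)\<bar> * \<bar>phistack d N phi W t \<omega> $ k\<bar>)"
      by (rule order_trans[OF abs_triangle_ineq]) (simp add: sum_abs[THEN order_trans] abs_mult)
    also have "\<dots> \<le> \<bar>e $ i\<bar> + (\<Sum>k<(N-1)*d. \<bar>T $$ (i,k)\<bar> * phimax)"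
      by (intro add_left_mono sum_mono mult_left_mono F_bound) auto
    also have "\<dots> \<le> Umax" using tt i unfolding tightened_def by (simp add: sum_distrib_right)
    finally show ?thesis .
  qed
  then show ?thesis using dec unfolding feasible_def by (auto intro!: AE_I2)
qed

end

theorem theorem3:
  fixes M :: "'a measure"
    and d m N \<kappa> t :: nat
    and A B Q Qf R :: "real mat"
    and W :: "nat \<Rightarrow> 'a \<Rightarrow> nat \<Rightarrow> real"
    and nu :: "nat \<Rightarrow> 'a \<Rightarrow> real"
    and phi :: "nat \<Rightarrow> real vec \<Rightarrow> real vec"
    and p Umax phimax :: real
    and xt :: "real vec"
  assumes P: "prob_space M"
    and dims: "A \<in> carrier_mat d d" "B \<in> carrier_mat d m"
    and Qpsd: "sym_psd d Q" and Qfpsd: "sym_psd d Qf" and Rpd: "sym_pd m R"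
    and Umax: "Umax > 0"
    and horizon: "1 \<le> \<kappa>" "\<kappa> \<le> N"
    and t_mult: "\<kappa> dvd t"
    and xt: "xt \<in> carrier_vec d"
    \<comment> \<open>noise: i.i.d., zero mean, bounded fourth moments, symmetric components\<close>
    and w_indep: "prob_space.indep_vars M (\<lambda>_. Rd d) (wrv d W) UNIV"
    and w_ident: "\<And>s. distr M (Rd d) (wrv d W s) = distr M (Rd d) (wrv d W 0)"
    and w_mean: "\<And>s j. j < d \<Longrightarrow>
                   integrable M (\<lambda>\<omega>. W s \<omega> j) \<and> integral\<^sup>L M (\<lambda>\<omega>. W s \<omega> j) = 0"
    and w_4th: "\<And>s j. j < d \<Longrightarrow> integrable M (\<lambda>\<omega>. (W s \<omega> j) ^ 4)"
    and w_sym: "\<And>s j. j < d \<Longrightarrow>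
                   distr M borel (\<lambda>\<omega>. W s \<omega> j) = distr M borel (\<lambda>\<omega>. - W s \<omega> j)"
    \<comment> \<open>erasure channel: i.i.d. Bernoulli(p), independent of the noise\<close>
    and p: "0 < p" "p \<le> 1"
    and nu_01: "\<And>s \<omega>. nu s \<omega> \<in> {0, 1}"
    and nu_indep: "prob_space.indep_vars M (\<lambda>_. borel) nu UNIV"
    and nu_p: "\<And>s. measure M {\<omega> \<in> space M. nu s \<omega> = 1} = p"
    and nu_w_indep: "prob_space.indep_var M
                       (PiM UNIV (\<lambda>_. Rd d)) (\<lambda>\<omega> s. wrv d W s \<omega>)
                       (PiM UNIV (\<lambda>_. PiM UNIV (\<lambda>_. borel))) (\<lambda>\<omega> s (_::nat). nu s \<omega>)"
    \<comment> \<open>the maps phi_1, ..., phi_{N-1}\<close>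
    and phi_meas: "\<And>i. 1 \<le> i \<Longrightarrow> i \<le> N - 1 \<Longrightarrow>
                     (\<lambda>v. restrict (\<lambda>j. phi i (vec d v) $ j) {..<d}) \<in> Rd d \<rightarrow>\<^sub>M Rd d"
    and phi_dim: "\<And>i v. 1 \<le> i \<Longrightarrow> i \<le> N - 1 \<Longrightarrow> v \<in> carrier_vec d \<Longrightarrow>
                     phi i v \<in> carrier_vec d"
    and phi_sym: "\<And>i v. 1 \<le> i \<Longrightarrow> i \<le> N - 1 \<Longrightarrow> v \<in> carrier_vec d \<Longrightarrow>
                     phi i (- v) = - phi i v"
    and phi_bound: "\<And>i v j. 1 \<le> i \<Longrightarrow> i \<le> N - 1 \<Longrightarrow> v \<in> carrier_vec d \<Longrightarrow> j < d \<Longrightarrow>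
                     \<bar>phi i v $ j\<bar> \<le> phimax"
    and phi_mean: "\<And>i s j. 1 \<le> i \<Longrightarrow> i \<le> N - 1 \<Longrightarrow> j < d \<Longrightarrow>
                     integral\<^sup>L M (\<lambda>\<omega>. phi i (wvec d W s \<omega>) $ j) = 0"
  shows
    \<comment> \<open>feasibility\<close>
    "(\<exists>\<eta> \<Theta>. feasible M d m N phi W t Umax \<eta> \<Theta>)
    \<comment> \<open>convexity of the feasible set\<close>
     \<and> (\<forall>\<eta>1 \<Theta>1 \<eta>2 \<Theta>2 a. feasible M d m N phi W t Umax \<eta>1 \<Theta>1
            \<and> feasible M d m N phi W t Umax \<eta>2 \<Theta>2 \<and> 0 \<le> a \<and> a \<le> 1 \<longrightarrow>
          feasible M d m N phi W t Umax (a \<cdot>\<^sub>v \<eta>1 + (1 - a) \<cdot>\<^sub>v \<eta>2) (a \<cdot>\<^sub>m \<Theta>1 + (1 - a) \<cdot>\<^sub>m \<Theta>2))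
    \<comment> \<open>convexity of the objective\<close>
     \<and> (\<forall>\<eta>1 \<Theta>1 \<eta>2 \<Theta>2 a. feasible M d m N phi W t Umax \<eta>1 \<Theta>1
            \<and> feasible M d m N phi W t Umax \<eta>2 \<Theta>2 \<and> 0 \<le> a \<and> a \<le> 1 \<longrightarrow>
          Jcost M d m N \<kappa> A B Q Qf R phi W nu t xt
              (a \<cdot>\<^sub>v \<eta>1 + (1 - a) \<cdot>\<^sub>v \<eta>2) (a \<cdot>\<^sub>m \<Theta>1 + (1 - a) \<cdot>\<^sub>m \<Theta>2)
          \<le> a * Jcost M d m N \<kappa> A B Q Qf R phi W nu t xt \<eta>1 \<Theta>1
            + (1 - a) * Jcost M d m N \<kappa> A B Q Qf R phi W nu t xt \<eta>2 \<Theta>2)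
    \<comment> \<open>the objective equals the tractable expression\<close>
     \<and> (\<forall>\<eta> \<Theta>. decision d m N \<eta> \<Theta> \<longrightarrow>
          Jcost M d m N \<kappa> A B Q Qf R phi W nu t xt \<eta> \<Theta>
          = Jtract M d m N \<kappa> A B Q Qf R phi W nu t xt \<eta> \<Theta>)
    \<comment> \<open>the tightened constraints imply the original constraints\<close>
     \<and> (\<forall>\<eta> \<Theta>. decision d m N \<eta> \<Theta> \<and> tightened d m N phimax Umax \<eta> \<Theta> \<longrightarrow>
          feasible M d m N phi W t Umax \<eta> \<Theta>)"
proof -
  interpret tp3 M d N W nu phi phimax
    by (rule tp3.intro[OF P nu_w_indep w_mean w_4th nu_01 phi_meas phi_bound phi_mean])
  have c1: "\<exists>\<eta> \<Theta>. feasible M d m N phi W t Umax \<eta> \<Theta>"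
    using feasible_zero[OF Umax] by blast
  have c2: "\<forall>\<eta>1 \<Theta>1 \<eta>2 \<Theta>2 a. feasible M d m N phi W t Umax \<eta>1 \<Theta>1
            \<and> feasible M d m N phi W t Umax \<eta>2 \<Theta>2 \<and> 0 \<le> a \<and> a \<le> 1 \<longrightarrow>
          feasible M d m N phi W t Umax (a \<cdot>\<^sub>v \<eta>1 + (1 - a) \<cdot>\<^sub>v \<eta>2) (a \<cdot>\<^sub>m \<Theta>1 + (1 - a) \<cdot>\<^sub>m \<Theta>2)"
    using feasible_convex by blast
  have c3: "\<forall>\<eta>1 \<Theta>1 \<eta>2 \<Theta>2 a. feasible M d m N phi W t Umax \<eta>1 \<Theta>1
            \<and> feasible M d m N phi W t Umax \<eta>2 \<Theta>2 \<and> 0 \<le> a \<and> a \<le> 1 \<longrightarrow>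
          Jcost M d m N \<kappa> A B Q Qf R phi W nu t xt
              (a \<cdot>\<^sub>v \<eta>1 + (1 - a) \<cdot>\<^sub>v \<eta>2) (a \<cdot>\<^sub>m \<Theta>1 + (1 - a) \<cdot>\<^sub>m \<Theta>2)
          \<le> a * Jcost M d m N \<kappa> A B Q Qf R phi W nu t xt \<eta>1 \<Theta>1
            + (1 - a) * Jcost M d m N \<kappa> A B Q Qf R phi W nu t xt \<eta>2 \<Theta>2"
    using J_convex[OF Qpsd Qfpsd Rpd xt] unfolding feasible_def by blast
  have c4: "\<forall>\<eta> \<Theta>. decision d m N \<eta> \<Theta> \<longrightarrow>
          Jcost M d m N \<kappa> A B Q Qf R phi W nu t xt \<eta> \<Theta>
          = Jtract M d m N \<kappa> A B Q Qf R phi W nu t xt \<eta> \<Theta>"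
    using main_eq(2)[OF Qpsd Qfpsd xt] unfolding decision_def theta_struct_def by blast
  have c5: "\<forall>\<eta> \<Theta>. decision d m N \<eta> \<Theta> \<and> tightened d m N phimax Umax \<eta> \<Theta> \<longrightarrow>
          feasible M d m N phi W t Umax \<eta> \<Theta>"
    using tight_feasible by blast
  show ?thesis using c1 c2 c3 c4 c5 by blast
qed


end
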